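(* Let $\Lambda=KQ/\langle I\rangle$ be a gentle algebra over an algebraically closed field $K$, let $\Gamma=KQ^{Aus}/\langle I^{Aus}\rangle$ be its Cohen–Macaulay Auslander algebra, and let $\Phi:\mathrm{mod}\,\Lambda\to\mathrm{mod}\,\Gamma$ be the functor described in the context. Then for every projective $\Lambda$-module $P$ the $\Gamma$-module $\Phi(P)$ is projective, and for every injective $\Lambda$-module $J$ the $\Gamma$-module $\Phi(J)$ is injective.
   Context: Conventions: arrows $\alpha:s(\alpha)\to t(\alpha)$; paths composed right to left ($\beta\alpha$ means $\alpha$ then $\beta$). A gentle algebra is a finite dimensional $\Lambda=KQ/\langle I\rangle$ where $I$ is a set of length-$2$ paths such that: each vertex is the start of at most two and the end of at most two arrows; for each arrow $\alpha$ there is at most one arrow $\beta$ with $t(\beta)=s(\alpha)$, $\alpha\beta\notin I$, at most one $\gamma$ with $s(\gamma)=t(\alpha)$, $\gamma\alpha\notin I$, at most one $\beta$ with $t(\beta)=s(\alpha)$, $\alpha\beta\in I$, and at most one $\gamma$ with $s(\gamma)=t(\alpha)$, $\gamma\alpha\in I$. Modules are finite dimensional left modules, i.e. representations of $(Q,I)$. $\mathcal{C}(\Lambda)$ is the set of repetition-free cyclic paths $\alpha_1\cdots\alpha_n$ (up to cyclic permutation) with $\alpha_i\alpha_{i+1}\in I$ for all $i$ (indices mod $n$); $Q_1^{cyc}$ is the set of arrows lying on such a cycle, $Q_1^{ncyc}=Q_1\setminus Q_1^{cyc}$. $Q^{Aus}$ has vertices $Q_0\sqcup Q_1^{cyc}$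 and arrows $Q_1^{ncyc}\sqcup\{\alpha^+:s(\alpha)\to\alpha\}_{\alpha\in Q_1^{cyc}}\sqcup\{\alpha^-:\alpha\to t(\alpha)\}_{\alpha\in Q_1^{cyc}}$; $I^{Aus}=\{\beta^+\alpha^-\mid\beta\alpha\in I,\ \alpha,\beta\in Q_1^{cyc}\}\cup\{\beta\alpha\mid\beta\alpha\in I,\ \alpha,\beta\in Q_1^{ncyc}\}$; $\Gamma=KQ^{Aus}/\langle I^{Aus}\rangle$ is (isomorphic to) the Cohen–Macaulay Auslander algebra of $\Lambda$. $\Phi(M)=\widehat{M}$ has $\widehat{M}_i=M_i$ ($i\in Q_0$), $\widehat{M}_\alpha=\mathrm{Im}\,M_\alpha$ ($\alpha\in Q_1^{cyc}$), $\widehat{M}_\beta=M_\beta$ ($\beta\in Q_1^{ncyc}$), and $\widehat{M}_{\alpha^+}$, $\widehat{M}_{\alpha^-}$ the surjection $M_{s(\alpha)}\to\mathrm{Im}\,M_\alpha$ and inclusion $\mathrm{Im}\,M_\alpha\to M_{t(\alpha)}$ factoring $M_\alpha$; morphisms go to induced morphisms. *)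

theory Defs
  imports "Jordan_Normal_Form.Matrix" "HOL-Computational_Algebra.Polynomial"
begin

definition alg_closed :: "'a::field itself \<Rightarrow> bool" where
  "alg_closed _ \<longleftrightarrow> (\<forall>p :: 'a poly. degree p > 0 \<longrightarrow> (\<exists>x. poly p x = 0))"

text \<open>A relation (b, a) in I stands for the path b a (first a, then b).\<close>

definition is_rep :: "'v set \<Rightarrow> 'e set \<Rightarrow> ('e \<Rightarrow> 'v) \<Rightarrow> ('e \<Rightarrow> 'v) \<Rightarrow> ('e \<times> 'e) set
    \<Rightarrow> ('v \<Rightarrow> nat) \<Rightarrow> ('e \<Rightarrow> 'a::field mat) \<Rightarrow> bool" where
  "is_rep V E s t I d m \<longleftrightarrow>
     (\<forall>e\<in>E. m e \<in> carrier_mat (d (t e)) (d (s e))) \<and>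
     (\<forall>(b, a)\<in>I. m b * m a = 0\<^sub>m (d (t b)) (d (s a)))"

definition is_hom :: "'v set \<Rightarrow> 'e set \<Rightarrow> ('e \<Rightarrow> 'v) \<Rightarrow> ('e \<Rightarrow> 'v)
    \<Rightarrow> ('v \<Rightarrow> nat) \<Rightarrow> ('e \<Rightarrow> 'a::field mat) \<Rightarrow> ('v \<Rightarrow> nat) \<Rightarrow> ('e \<Rightarrow> 'a mat)
    \<Rightarrow> ('v \<Rightarrow> 'a mat) \<Rightarrow> bool" where
  "is_hom V E s t d m d' m' f \<longleftrightarrow>
     (\<forall>i\<in>V. f i \<in> carrier_mat (d' i) (d i)) \<and>
     (\<forall>e\<in>E. f (t e) * m e = m' e * f (s e))"

definition mat_surj :: "'a::field mat \<Rightarrow> bool" where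
  "mat_surj A \<longleftrightarrow> (\<forall>y\<in>carrier_vec (dim_row A). \<exists>x\<in>carrier_vec (dim_col A). A *\<^sub>v x = y)"

definition mat_inj :: "'a::field mat \<Rightarrow> bool" where
  "mat_inj A \<longleftrightarrow> (\<forall>x\<in>carrier_vec (dim_col A). A *\<^sub>v x = 0\<^sub>v (dim_row A) \<longrightarrow> x = 0\<^sub>v (dim_col A))"

text \<open>Projective / injective objects of the category of (finite dimensional)
  representations of the bound quiver; epimorphisms/monomorphisms there are the
  pointwise surjective/injective morphisms.\<close>

definition projective_rep :: "'v set \<Rightarrow> 'e set \<Rightarrow> ('e \<Rightarrow> 'v) \<Rightarrow> ('e \<Rightarrow> 'v) \<Rightarrow> ('e \<times> 'e) set
    \<Rightarrow> ('v \<Rightarrow> nat) \<Rightarrow> ('e \<Rightarrow> 'a::field mat) \<Rightarrow> bool" where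
  "projective_rep V E s t I d m \<longleftrightarrow> is_rep V E s t I d m \<and>
     (\<forall>(dM :: 'v \<Rightarrow> nat) (mM :: 'e \<Rightarrow> 'a mat) dN mN g h.
        is_rep V E s t I dM mM \<longrightarrow> is_rep V E s t I dN mN \<longrightarrow>
        is_hom V E s t dM mM dN mN g \<longrightarrow> (\<forall>i\<in>V. mat_surj (g i)) \<longrightarrow>
        is_hom V E s t d m dN mN h \<longrightarrow>
        (\<exists>k. is_hom V E s t d m dM mM k \<and> (\<forall>i\<in>V. g i * k i = h i)))"

definition injective_rep :: "'v set \<Rightarrow> 'e set \<Rightarrow> ('e \<Rightarrow> 'v) \<Rightarrow> ('e \<Rightarrow> 'v) \<Rightarrow> ('e \<times> 'e) set
    \<Rightarrow> ('v \<Rightarrow> nat) \<Rightarrow> ('e \<Rightarrow> 'a::field mat) \<Rightarrow> bool" where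
  "injective_rep V E s t I d m \<longleftrightarrow> is_rep V E s t I d m \<and>
     (\<forall>(dM :: 'v \<Rightarrow> nat) (mM :: 'e \<Rightarrow> 'a mat) dN mN g h.
        is_rep V E s t I dM mM \<longrightarrow> is_rep V E s t I dN mN \<longrightarrow>
        is_hom V E s t dM mM dN mN g \<longrightarrow> (\<forall>i\<in>V. mat_inj (g i)) \<longrightarrow>
        is_hom V E s t dM mM d m h \<longrightarrow>
        (\<exists>k. is_hom V E s t dN mN d m k \<and> (\<forall>i\<in>V. k i * g i = h i)))"

text \<open>Gentle algebras. Paths are lists of arrows in the order they are traversed.\<close>

definition nonzero_path :: "'e set \<Rightarrow> ('e \<Rightarrow> 'v) \<Rightarrow> ('e \<Rightarrow> 'v) \<Rightarrow> ('e \<times> 'e) set \<Rightarrow> 'e list \<Rightarrow> bool" where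
  "nonzero_path E s t I xs \<longleftrightarrow> set xs \<subseteq> E \<and>
     (\<forall>i. Suc i < length xs \<longrightarrow> t (xs ! i) = s (xs ! Suc i) \<and> (xs ! Suc i, xs ! i) \<notin> I)"

definition gentle :: "'v set \<Rightarrow> 'e set \<Rightarrow> ('e \<Rightarrow> 'v) \<Rightarrow> ('e \<Rightarrow> 'v) \<Rightarrow> ('e \<times> 'e) set \<Rightarrow> bool" where
  "gentle V E s t I \<longleftrightarrow>
     finite V \<and> finite E \<and> (\<forall>e\<in>E. s e \<in> V \<and> t e \<in> V) \<and>
     (\<forall>(b, a)\<in>I. a \<in> E \<and> b \<in> E \<and> t a = s b) \<and>
     (\<forall>i\<in>V. card {a\<in>E. s a = i} \<le> 2 \<and> card {a\<in>E. t a = i} \<le> 2) \<and>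
     (\<forall>a\<in>E.
        card {b\<in>E. t b = s a \<and> (a, b) \<notin> I} \<le> 1 \<and>
        card {c\<in>E. s c = t a \<and> (c, a) \<notin> I} \<le> 1 \<and>
        card {b\<in>E. t b = s a \<and> (a, b) \<in> I} \<le> 1 \<and>
        card {c\<in>E. s c = t a \<and> (c, a) \<in> I} \<le> 1) \<and>
     (\<exists>N. \<forall>xs. nonzero_path E s t I xs \<longrightarrow> length xs \<le> N)"

text \<open>Arrows lying on a repetition-free cycle alpha_1 ... alpha_n with all
  alpha_i alpha_(i+1) in I (indices mod n). The list xs is the cycle in
  traversal order, i.e. xs = [alpha_n, ..., alpha_1].\<close>

definition cyc_arrow :: "'e set \<Rightarrow> ('e \<Rightarrow> 'v) \<Rightarrow> ('e \<Rightarrow> 'v) \<Rightarrow> ('e \<times> 'e) set \<Rightarrow> 'e \<Rightarrow> bool" where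
  "cyc_arrow E s t I \<alpha> \<longleftrightarrow> (\<exists>xs. xs \<noteq> [] \<and> distinct xs \<and> set xs \<subseteq> E \<and> \<alpha> \<in> set xs \<and>
     (\<forall>i<length xs. t (xs ! i) = s (xs ! (Suc i mod length xs)) \<and>
                    (xs ! (Suc i mod length xs), xs ! i) \<in> I))"

definition cyc_arrows :: "'e set \<Rightarrow> ('e \<Rightarrow> 'v) \<Rightarrow> ('e \<Rightarrow> 'v) \<Rightarrow> ('e \<times> 'e) set \<Rightarrow> 'e set" where
  "cyc_arrows E s t I = {a\<in>E. cyc_arrow E s t I a}"

datatype ('v, 'e) aus_vert = QV 'v | AV 'e
datatype 'e aus_arr = NA 'e | PA 'e | MA 'e

fun aus_s :: "('e \<Rightarrow> 'v) \<Rightarrow> 'e aus_arr \<Rightarrow> ('v, 'e) aus_vert" where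
  "aus_s s (NA e) = QV (s e)"
| "aus_s s (PA e) = QV (s e)"
| "aus_s s (MA e) = AV e"

fun aus_t :: "('e \<Rightarrow> 'v) \<Rightarrow> 'e aus_arr \<Rightarrow> ('v, 'e) aus_vert" where
  "aus_t t (NA e) = QV (t e)"
| "aus_t t (PA e) = AV e"
| "aus_t t (MA e) = QV (t e)"

definition aus_V :: "'v set \<Rightarrow> 'e set \<Rightarrow> ('e \<Rightarrow> 'v) \<Rightarrow> ('e \<Rightarrow> 'v) \<Rightarrow> ('e \<times> 'e) set
    \<Rightarrow> ('v, 'e) aus_vert set" where
  "aus_V V E s t I = QV ` V \<union> AV ` cyc_arrows E s t I"

definition aus_E :: "'e set \<Rightarrow> ('e \<Rightarrow> 'v) \<Rightarrow> ('e \<Rightarrow> 'v) \<Rightarrow> ('e \<times> 'e) set \<Rightarrow> 'e aus_arr set" where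
  "aus_E E s t I = NA ` (E - cyc_arrows E s t I) \<union> PA ` cyc_arrows E s t I \<union> MA ` cyc_arrows E s t I"

definition aus_I :: "'e set \<Rightarrow> ('e \<Rightarrow> 'v) \<Rightarrow> ('e \<Rightarrow> 'v) \<Rightarrow> ('e \<times> 'e) set
    \<Rightarrow> ('e aus_arr \<times> 'e aus_arr) set" where
  "aus_I E s t I =
     {(PA b, MA a) | a b. (b, a) \<in> I \<and> a \<in> cyc_arrows E s t I \<and> b \<in> cyc_arrows E s t I} \<union>
     {(NA b, NA a) | a b. (b, a) \<in> I \<and> a \<in> E - cyc_arrows E s t I \<and> b \<in> E - cyc_arrows E s t I}"

text \<open>(d', m') is (a representative of the isomorphism class of) Phi(d, m):
  same spaces at old vertices, the image of M_alpha at the vertex alpha,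
  M_alpha factored as the surjection m'(PA alpha) followed by the injection m'(MA alpha).\<close>

definition is_Phi_image :: "'v set \<Rightarrow> 'e set \<Rightarrow> ('e \<Rightarrow> 'v) \<Rightarrow> ('e \<Rightarrow> 'v) \<Rightarrow> ('e \<times> 'e) set
    \<Rightarrow> ('v \<Rightarrow> nat) \<Rightarrow> ('e \<Rightarrow> 'a::field mat)
    \<Rightarrow> (('v, 'e) aus_vert \<Rightarrow> nat) \<Rightarrow> ('e aus_arr \<Rightarrow> 'a mat) \<Rightarrow> bool" where
  "is_Phi_image V E s t I d m d' m' \<longleftrightarrow>
     (\<forall>i\<in>V. d' (QV i) = d i) \<and>
     (\<forall>b\<in>E - cyc_arrows E s t I. m' (NA b) = m b) \<and>
     (\<forall>a\<in>cyc_arrows E s t I.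
        m' (PA a) \<in> carrier_mat (d' (AV a)) (d (s a)) \<and>
        m' (MA a) \<in> carrier_mat (d (t a)) (d' (AV a)) \<and>
        mat_surj (m' (PA a)) \<and> mat_inj (m' (MA a)) \<and>
        m' (MA a) * m' (PA a) = m a)"

end

theory Submission
  imports Defs
begin

lemma vec_sub0: "(x::'a::field vec) \<in> carrier_vec n \<Longrightarrow> y \<in> carrier_vec n \<Longrightarrow> x - y = 0\<^sub>v n \<Longrightarrow> x = y"
  by (metis (no_types, lifting) ext comm_add_vec minus_add_minus_vec
    minus_cancel_vec uminus_eq_vec zero_minus_vec)

lemma mat_unit_col: "(A::'a::field mat) \<in> carrier_mat n m \<Longrightarrow> j < m \<Longrightarrow> A *\<^sub>v unit_vec m j = col A j"
  by (rule eq_vecI) (auto simp: index_row)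

lemma mat_eq_by_vec:
  fixes A :: "'a::field mat"
  assumes "A \<in> carrier_mat n m" "B \<in> carrier_mat n m"
    and "\<And>v. v \<in> carrier_vec m \<Longrightarrow> A *\<^sub>v v = B *\<^sub>v v"
  shows "A = B"
proof (rule mat_col_eqI)
  fix j assume "j < dim_col B"
  hence j: "j < m" using assms by auto
  have "A *\<^sub>v unit_vec m j = B *\<^sub>v unit_vec m j" using assms(3) by simp
  thus "col A j = col B j" using mat_unit_col[OF assms(1) j] mat_unit_col[OF assms(2) j] by simp
qed (use assms in auto)

lemma surj_right_inv:
  fixes A :: "'a::field mat"
  assumes A: "A \<in> carrier_mat n m" and su: "mat_surj A"
  shows "\<exists>S \<in> carrier_mat m n. A * S = 1\<^sub>m n"
proof -
  define f where "f j = (SOME x. x \<in> carrier_vec m \<and> A *\<^sub>v x = unit_vec n j)" for j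
  have f: "f j \<in> carrier_vec m \<and> A *\<^sub>v f j = unit_vec n j" for j
  proof -
    have "\<exists>x\<in>carrier_vec (dim_col A). A *\<^sub>v x = unit_vec n j"
      using su A unfolding mat_surj_def by auto
    hence "\<exists>x. x \<in> carrier_vec m \<and> A *\<^sub>v x = unit_vec n j" using A by auto
    thus ?thesis unfolding f_def by (rule someI_ex)
  qed
  define S where "S = mat m n (\<lambda>(i,j). f j $ i)"
  have S: "S \<in> carrier_mat m n" unfolding S_def by auto
  have colS: "col S j = f j" if "j < n" for j
    using that f[of j] unfolding S_def by (auto simp: col_mat)
  have "A * S = 1\<^sub>m n"
  proof (rule mat_col_eqI)
    fix j assume "j < dim_col (1\<^sub>m n :: 'a mat)"
    hence j: "j < n" by simp
    show "col (A * S) j = col (1\<^sub>m n) j"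
      using col_mult2[OF A S j] colS[OF j] f[of j] col_one[OF j] by metis
  qed (use A S in auto)
  thus ?thesis using S by blast
qed

lemma surj_cancel_right:
  fixes A :: "'a::field mat"
  assumes A: "A \<in> carrier_mat n m" and su: "mat_surj A"
    and X: "X \<in> carrier_mat k n" and Y: "Y \<in> carrier_mat k n"
    and eq: "X * A = Y * A"
  shows "X = Y"
proof -
  obtain S where S: "S \<in> carrier_mat m n" and AS: "A * S = 1\<^sub>m n"
    using surj_right_inv[OF A su] by blast
  have "X = X * (A * S)" using AS X by simp
  also have "\<dots> = (X * A) * S" using X A S by (simp add: assoc_mult_mat)
  also have "\<dots> = (Y * A) * S" using eq by simp
  also have "\<dots> = Y * (A * S)" using Y A S by (simp add: assoc_mult_mat)
  also have "\<dots> = Y" using AS Y by simp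
  finally show ?thesis .
qed

lemma inj_cancel_left:
  fixes A :: "'a::field mat"
  assumes A: "A \<in> carrier_mat n m" and inj: "mat_inj A"
    and X: "X \<in> carrier_mat m k" and Y: "Y \<in> carrier_mat m k"
    and eq: "A * X = A * Y"
  shows "X = Y"
proof (rule mat_col_eqI)
  fix j assume "j < dim_col Y"
  hence j: "j < k" using Y by simp
  have cx: "col X j \<in> carrier_vec m" and cy: "col Y j \<in> carrier_vec m" using X Y by auto
  have "A *\<^sub>v col X j = A *\<^sub>v col Y j"
    using col_mult2[OF A X j] col_mult2[OF A Y j] eq by simp
  hence "A *\<^sub>v (col X j - col Y j) = 0\<^sub>v n"
    using mult_minus_distrib_mat_vec[OF A cx cy] A by auto
  hence "col X j - col Y j = 0\<^sub>v m" using inj A cx cy unfolding mat_inj_def by auto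
  thus "col X j = col Y j" using cx cy vec_sub0 by blast
qed (use X Y in auto)

lemma factor_surj:
  fixes A :: "'a::field mat"
  assumes A: "A \<in> carrier_mat n m" and su: "mat_surj A" and B: "B \<in> carrier_mat k m"
    and ker: "\<And>x. x \<in> carrier_vec m \<Longrightarrow> A *\<^sub>v x = 0\<^sub>v n \<Longrightarrow> B *\<^sub>v x = 0\<^sub>v k"
  shows "\<exists>C \<in> carrier_mat k n. C * A = B"
proof -
  obtain S where S: "S \<in> carrier_mat m n" and AS: "A * S = 1\<^sub>m n"
    using surj_right_inv[OF A su] by blast
  have "B * S * A = B"
  proof (rule mat_eq_by_vec)
    show "B * S * A \<in> carrier_mat k m" using B S A by auto
    show "B \<in> carrier_mat k m" by fact
    fix v :: "'a vec" assume v: "v \<in> carrier_vec m"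
    have Av: "A *\<^sub>v v \<in> carrier_vec n" using A v by auto
    have w: "S *\<^sub>v (A *\<^sub>v v) \<in> carrier_vec m" using S Av by auto
    have "A *\<^sub>v (S *\<^sub>v (A *\<^sub>v v)) = A *\<^sub>v v"
      using assoc_mult_mat_vec[OF A S Av, symmetric] AS Av by simp
    hence "A *\<^sub>v (S *\<^sub>v (A *\<^sub>v v) - v) = 0\<^sub>v n"
      using mult_minus_distrib_mat_vec[OF A w v] Av by auto
    hence "B *\<^sub>v (S *\<^sub>v (A *\<^sub>v v) - v) = 0\<^sub>v k" using ker w v by auto
    hence eq: "B *\<^sub>v (S *\<^sub>v (A *\<^sub>v v)) = B *\<^sub>v v"
      using mult_minus_distrib_mat_vec[OF B w v] B v w vec_sub0
      by (metis carrier_vecI dim_mult_mat_vec carrier_matD(1))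
    have "B * S * A *\<^sub>v v = B *\<^sub>v (S *\<^sub>v (A *\<^sub>v v))"
    proof -
      have BS: "B * S \<in> carrier_mat k n" using B S by auto
      have "B * S * A *\<^sub>v v = (B * S) *\<^sub>v (A *\<^sub>v v)" by (rule assoc_mult_mat_vec[OF BS A v])
      also have "\<dots> = B *\<^sub>v (S *\<^sub>v (A *\<^sub>v v))" by (rule assoc_mult_mat_vec[OF B S Av])
      finally show ?thesis .
    qed
    thus "B * S * A *\<^sub>v v = B *\<^sub>v v" using eq by simp
  qed
  thus ?thesis using B S by (intro bexI[of _ "B * S"]) auto
qed

lemma factor_image:
  fixes A :: "'a::field mat"
  assumes A: "A \<in> carrier_mat n m" and B: "B \<in> carrier_mat n k"
    and im: "\<And>y. y \<in> carrier_vec k \<Longrightarrow> \<exists>x\<in>carrier_vec m. A *\<^sub>v x = B *\<^sub>v y"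
  shows "\<exists>C \<in> carrier_mat m k. A * C = B"
proof -
  define f where "f j = (SOME x. x \<in> carrier_vec m \<and> A *\<^sub>v x = B *\<^sub>v unit_vec k j)" for j
  have f: "f j \<in> carrier_vec m \<and> A *\<^sub>v f j = B *\<^sub>v unit_vec k j" for j
  proof -
    have "\<exists>x. x \<in> carrier_vec m \<and> A *\<^sub>v x = B *\<^sub>v unit_vec k j" using im[of "unit_vec k j"] by auto
    thus ?thesis unfolding f_def by (rule someI_ex)
  qed
  define C where "C = mat m k (\<lambda>(i,j). f j $ i)"
  have C: "C \<in> carrier_mat m k" unfolding C_def by auto
  have colC: "col C j = f j" if "j < k" for j
    using that f[of j] unfolding C_def by (auto simp: col_mat)
  have "A * C = B"
  proof (rule mat_col_eqI)
    fix j assume "j < dim_col B"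
    hence j: "j < k" using B by simp
    show "col (A * C) j = col B j"
      using col_mult2[OF A C j] colC[OF j] f[of j] mat_unit_col[OF B j] by simp
  qed (use A B C in auto)
  thus ?thesis using C by blast
qed

lemma gentleD:
  assumes "gentle V E s t I"
  shows "finite V" "finite E" "\<forall>e\<in>E. s e \<in> V \<and> t e \<in> V"
    "\<forall>(b, a)\<in>I. a \<in> E \<and> b \<in> E \<and> t a = s b"
    "\<forall>a\<in>E.
        card {b\<in>E. t b = s a \<and> (a, b) \<notin> I} \<le> 1 \<and>
        card {c\<in>E. s c = t a \<and> (c, a) \<notin> I} \<le> 1 \<and>
        card {b\<in>E. t b = s a \<and> (a, b) \<in> I} \<le> 1 \<and>
        card {c\<in>E. s c = t a \<and> (c, a) \<in> I} \<le> 1"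
    "\<exists>N. \<forall>xs. nonzero_path E s t I xs \<longrightarrow> length xs \<le> N"
  using assms unfolding gentle_def apply - apply (elim conjE, assumption)+ done


lemma gentle_I: "gentle V E s t I \<Longrightarrow> (b, a) \<in> I \<Longrightarrow> a \<in> E \<and> b \<in> E \<and> t a = s b"
  using gentleD(4) by fastforce

lemma gentle_fin: "gentle V E s t I \<Longrightarrow> finite E"
  by (rule gentleD(2))

lemma gentle_st: "gentle V E s t I \<Longrightarrow> e \<in> E \<Longrightarrow> s e \<in> V \<and> t e \<in> V"
  using gentleD(3) by blast

lemma gentle_pred_uniq:
  assumes g: "gentle V E s t I" and "(a, b) \<in> I" "(a, b') \<in> I"
  shows "b = b'"
proof -
  have a: "a \<in> E" and bb: "b \<in> E" "t b = s a" "b' \<in> E" "t b' = s a"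
    using gentle_I[OF g assms(2)] gentle_I[OF g assms(3)] by auto
  have c: "card {b\<in>E. t b = s a \<and> (a, b) \<in> I} \<le> Suc 0" using gentleD(5)[OF g] a by auto
  have fin: "finite {b\<in>E. t b = s a \<and> (a, b) \<in> I}" using gentle_fin[OF g] by auto
  have "\<forall>x\<in>{b\<in>E. t b = s a \<and> (a, b) \<in> I}. \<forall>y\<in>{b\<in>E. t b = s a \<and> (a, b) \<in> I}. x = y"
    using card_le_Suc0_iff_eq[OF fin] c by blast
  thus ?thesis using bb assms(2,3) by blast
qed

lemma gentle_succ_uniq:
  assumes g: "gentle V E s t I" and "(c, a) \<in> I" "(c', a) \<in> I"
  shows "c = c'"
proof -
  have a: "a \<in> E" and bb: "c \<in> E" "s c = t a" "c' \<in> E" "s c' = t a"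
    using gentle_I[OF g assms(2)] gentle_I[OF g assms(3)] by auto
  have c: "card {c\<in>E. s c = t a \<and> (c, a) \<in> I} \<le> Suc 0" using gentleD(5)[OF g] a by auto
  have fin: "finite {c\<in>E. s c = t a \<and> (c, a) \<in> I}" using gentle_fin[OF g] by auto
  have "\<forall>x\<in>{c\<in>E. s c = t a \<and> (c, a) \<in> I}. \<forall>y\<in>{c\<in>E. s c = t a \<and> (c, a) \<in> I}. x = y"
    using card_le_Suc0_iff_eq[OF fin] c by blast
  thus ?thesis using bb assms(2,3) by blast
qed

lemma cyc_succ:
  assumes "a \<in> cyc_arrows E s t I"
  shows "\<exists>c \<in> cyc_arrows E s t I. (c, a) \<in> I"
proof -
  obtain xs where xs: "xs \<noteq> []" "distinct xs" "set xs \<subseteq> E" "a \<in> set xs"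
    and P: "\<forall>i<length xs. t (xs ! i) = s (xs ! (Suc i mod length xs)) \<and>
                    (xs ! (Suc i mod length xs), xs ! i) \<in> I"
    using assms unfolding cyc_arrows_def cyc_arrow_def by blast
  obtain i where i: "i < length xs" "xs ! i = a" using xs(4) by (metis in_set_conv_nth)
  let ?c = "xs ! (Suc i mod length xs)"
  have "Suc i mod length xs < length xs" using xs(1) by simp
  hence cin: "?c \<in> set xs" by simp
  hence "?c \<in> cyc_arrows E s t I" using xs P unfolding cyc_arrows_def cyc_arrow_def by blast
  thus ?thesis using P i by blast
qed

lemma cyc_pred:
  assumes "a \<in> cyc_arrows E s t I"
  shows "\<exists>c \<in> cyc_arrows E s t I. (a, c) \<in> I"
proof -
  obtain xs where xs: "xs \<noteq> []" "distinct xs" "set xs \<subseteq> E" "a \<in> set xs"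
    and P: "\<forall>i<length xs. t (xs ! i) = s (xs ! (Suc i mod length xs)) \<and>
                    (xs ! (Suc i mod length xs), xs ! i) \<in> I"
    using assms unfolding cyc_arrows_def cyc_arrow_def by blast
  obtain i where i: "i < length xs" "xs ! i = a" using xs(4) by (metis in_set_conv_nth)
  define n where "n = length xs"
  have n: "n > 0" using xs(1) n_def by simp
  define j where "j = (i + n - 1) mod n"
  have j: "j < n" using n j_def by simp
  have "Suc j mod n = i"
  proof (cases i)
    case 0
    hence "j = n - 1" using n j_def by simp
    hence "Suc j = n" using n by simp
    thus ?thesis using 0 by simp
  next
    case (Suc k)
    have "i < n" using i n_def by simp
    hence "j = k" using j_def Suc by simp
    thus ?thesis using Suc \<open>i < n\<close> by simp
  qed
  hence rel: "(a, xs ! j) \<in> I" using P j i unfolding n_def by metis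
  have jin: "xs ! j \<in> set xs" using j n_def by simp
  have "cyc_arrow E s t I (xs ! j)" unfolding cyc_arrow_def using xs(1,2,3) P jin by blast
  hence "xs ! j \<in> cyc_arrows E s t I" unfolding cyc_arrows_def using xs(3) jin by blast
  thus ?thesis using rel by blast
qed

lemma cyc_rel_closed:
  assumes g: "gentle V E s t I" and r: "(b, a) \<in> I"
  shows "a \<in> cyc_arrows E s t I \<longleftrightarrow> b \<in> cyc_arrows E s t I"
proof
  assume h: "a \<in> cyc_arrows E s t I"
  obtain c where c: "c \<in> cyc_arrows E s t I" "(c, a) \<in> I" using cyc_succ[OF h] by blast
  have "b = c" using gentle_succ_uniq[OF g r c(2)] .
  thus "b \<in> cyc_arrows E s t I" using c(1) by (rule ssubst)
next
  assume h: "b \<in> cyc_arrows E s t I"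
  obtain c where c: "c \<in> cyc_arrows E s t I" "(b, c) \<in> I" using cyc_pred[OF h] by blast
  have "a = c" using gentle_pred_uniq[OF g r c(2)] .
  thus "a \<in> cyc_arrows E s t I" using c(1) by (rule ssubst)
qed

lemma cyc_sub: "cyc_arrows E s t I \<subseteq> E" unfolding cyc_arrows_def by auto

lemma assoc4:
  fixes A :: "'a::semiring_1 mat"
  assumes a: "A \<in> carrier_mat n1 n2" and b: "B \<in> carrier_mat n2 n3"
    and c: "C \<in> carrier_mat n3 n4" and d: "D \<in> carrier_mat n4 n5"
  shows "(A * B) * (C * D) = A * (B * C) * D"
proof -
  have cd: "C * D \<in> carrier_mat n3 n5" using c d by auto
  have bc: "B * C \<in> carrier_mat n2 n4" using b c by auto
  have "(A * B) * (C * D) = A * (B * (C * D))" by (rule assoc_mult_mat[OF a b cd])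
  also have "B * (C * D) = (B * C) * D" by (rule assoc_mult_mat[OF b c d, symmetric])
  also have "A * ((B * C) * D) = (A * (B * C)) * D" by (rule assoc_mult_mat[OF a bc d, symmetric])
  finally show ?thesis .
qed

abbreviation CA where "CA E s t I \<equiv> cyc_arrows E s t I"

lemma aus_rep_D:
  assumes "is_rep (aus_V V E s t I) (aus_E E s t I) (aus_s s) (aus_t t) J dM mM"
  shows "\<alpha> \<in> CA E s t I \<Longrightarrow> mM (PA \<alpha>) \<in> carrier_mat (dM (AV \<alpha>)) (dM (QV (s \<alpha>)))"
    and "\<alpha> \<in> CA E s t I \<Longrightarrow> mM (MA \<alpha>) \<in> carrier_mat (dM (QV (t \<alpha>))) (dM (AV \<alpha>))"
    and "e \<in> E \<Longrightarrow> e \<notin> CA E s t I \<Longrightarrow> mM (NA e) \<in> carrier_mat (dM (QV (t e))) (dM (QV (s e)))"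
    and "(x, y) \<in> J \<Longrightarrow> mM x * mM y = 0\<^sub>m (dM (aus_t t x)) (dM (aus_s s y))"
proof -
  have A: "\<forall>e\<in>aus_E E s t I. mM e \<in> carrier_mat (dM (aus_t t e)) (dM (aus_s s e))"
    and B: "\<forall>(x, y)\<in>J. mM x * mM y = 0\<^sub>m (dM (aus_t t x)) (dM (aus_s s y))"
    using assms unfolding is_rep_def by auto
  show "\<alpha> \<in> CA E s t I \<Longrightarrow> mM (PA \<alpha>) \<in> carrier_mat (dM (AV \<alpha>)) (dM (QV (s \<alpha>)))"
  proof -
    assume "\<alpha> \<in> CA E s t I"
    hence "PA \<alpha> \<in> aus_E E s t I" unfolding aus_E_def by blast
    thus ?thesis using A by fastforce
  qed
  show "\<alpha> \<in> CA E s t I \<Longrightarrow> mM (MA \<alpha>) \<in> carrier_mat (dM (QV (t \<alpha>))) (dM (AV \<alpha>))"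
  proof -
    assume "\<alpha> \<in> CA E s t I"
    hence "MA \<alpha> \<in> aus_E E s t I" unfolding aus_E_def by blast
    thus ?thesis using A by fastforce
  qed
  show "e \<in> E \<Longrightarrow> e \<notin> CA E s t I \<Longrightarrow> mM (NA e) \<in> carrier_mat (dM (QV (t e))) (dM (QV (s e)))"
  proof -
    assume "e \<in> E" "e \<notin> CA E s t I"
    hence "NA e \<in> aus_E E s t I" unfolding aus_E_def by blast
    thus ?thesis using A by fastforce
  qed
  show "(x, y) \<in> J \<Longrightarrow> mM x * mM y = 0\<^sub>m (dM (aus_t t x)) (dM (aus_s s y))"
    using B by fastforce
qed

lemma aus_I_cyc: "(b, a) \<in> I \<Longrightarrow> a \<in> CA E s t I \<Longrightarrow> b \<in> CA E s t I \<Longrightarrow> (PA b, MA a) \<in> aus_I E s t I"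
  unfolding aus_I_def by blast

lemma aus_I_ncyc: "(b, a) \<in> I \<Longrightarrow> a \<in> E \<Longrightarrow> b \<in> E \<Longrightarrow> a \<notin> CA E s t I \<Longrightarrow> b \<notin> CA E s t I
   \<Longrightarrow> (NA b, NA a) \<in> aus_I E s t I"
  unfolding aus_I_def by blast

lemma aus_hom_D:
  assumes "is_hom (aus_V V E s t I) (aus_E E s t I) (aus_s s) (aus_t t) dM mM dN mN f"
  shows "\<alpha> \<in> CA E s t I \<Longrightarrow> f (AV \<alpha>) \<in> carrier_mat (dN (AV \<alpha>)) (dM (AV \<alpha>))"
    and "i \<in> V \<Longrightarrow> f (QV i) \<in> carrier_mat (dN (QV i)) (dM (QV i))"
    and "\<alpha> \<in> CA E s t I \<Longrightarrow> f (AV \<alpha>) * mM (PA \<alpha>) = mN (PA \<alpha>) * f (QV (s \<alpha>))"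
    and "\<alpha> \<in> CA E s t I \<Longrightarrow> f (QV (t \<alpha>)) * mM (MA \<alpha>) = mN (MA \<alpha>) * f (AV \<alpha>)"
    and "e \<in> E \<Longrightarrow> e \<notin> CA E s t I \<Longrightarrow> f (QV (t e)) * mM (NA e) = mN (NA e) * f (QV (s e))"
proof -
  have A: "\<forall>i\<in>aus_V V E s t I. f i \<in> carrier_mat (dN i) (dM i)"
    and B: "\<forall>e\<in>aus_E E s t I. f (aus_t t e) * mM e = mN e * f (aus_s s e)"
    using assms unfolding is_hom_def by auto
  show "\<alpha> \<in> CA E s t I \<Longrightarrow> f (AV \<alpha>) \<in> carrier_mat (dN (AV \<alpha>)) (dM (AV \<alpha>))"
    using A unfolding aus_V_def by blast
  show "i \<in> V \<Longrightarrow> f (QV i) \<in> carrier_mat (dN (QV i)) (dM (QV i))"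
    using A unfolding aus_V_def by blast
  show "\<alpha> \<in> CA E s t I \<Longrightarrow> f (AV \<alpha>) * mM (PA \<alpha>) = mN (PA \<alpha>) * f (QV (s \<alpha>))"
  proof -
    assume "\<alpha> \<in> CA E s t I"
    hence "PA \<alpha> \<in> aus_E E s t I" unfolding aus_E_def by blast
    thus ?thesis using B by fastforce
  qed
  show "\<alpha> \<in> CA E s t I \<Longrightarrow> f (QV (t \<alpha>)) * mM (MA \<alpha>) = mN (MA \<alpha>) * f (AV \<alpha>)"
  proof -
    assume "\<alpha> \<in> CA E s t I"
    hence "MA \<alpha> \<in> aus_E E s t I" unfolding aus_E_def by blast
    thus ?thesis using B by fastforce
  qed
  show "e \<in> E \<Longrightarrow> e \<notin> CA E s t I \<Longrightarrow> f (QV (t e)) * mM (NA e) = mN (NA e) * f (QV (s e))"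
  proof -
    assume "e \<in> E" "e \<notin> CA E s t I"
    hence "NA e \<in> aus_E E s t I" unfolding aus_E_def by blast
    thus ?thesis using B by fastforce
  qed
qed

definition Rd :: "(('v, 'e) aus_vert \<Rightarrow> nat) \<Rightarrow> 'v \<Rightarrow> nat" where
  "Rd dM i = dM (QV i)"

definition Rm :: "'e set \<Rightarrow> ('e aus_arr \<Rightarrow> 'a::field mat) \<Rightarrow> 'e \<Rightarrow> 'a mat" where
  "Rm C mM e = (if e \<in> C then mM (MA e) * mM (PA e) else mM (NA e))"

lemma R_rep:
  assumes g: "gentle V E s t I"
    and r: "is_rep (aus_V V E s t I) (aus_E E s t I) (aus_s s) (aus_t t) (aus_I E s t I) dM mM"
  shows "is_rep V E s t I (Rd dM) (Rm (CA E s t I) mM)"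
  unfolding is_rep_def
proof (intro conjI ballI)
  fix e assume e: "e \<in> E"
  show "Rm (CA E s t I) mM e \<in> carrier_mat (Rd dM (t e)) (Rd dM (s e))"
  proof (cases "e \<in> CA E s t I")
    case True thus ?thesis using aus_rep_D(1,2)[OF r True] unfolding Rm_def Rd_def by auto
  next
    case False thus ?thesis using aus_rep_D(3)[OF r e False] unfolding Rm_def Rd_def by auto
  qed
next
  fix x assume x: "x \<in> I"
  obtain b a where ba: "x = (b, a)" by (cases x)
  have rel: "(b, a) \<in> I" using x ba by simp
  have ab: "a \<in> E" "b \<in> E" "t a = s b" using gentle_I[OF g rel] by auto
  have "Rm (CA E s t I) mM b * Rm (CA E s t I) mM a = 0\<^sub>m (Rd dM (t b)) (Rd dM (s a))"
  proof (cases "a \<in> CA E s t I")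
    case True
    hence bc: "b \<in> CA E s t I" using cyc_rel_closed[OF g rel] by simp
    note c1 = aus_rep_D(1)[OF r True] and c2 = aus_rep_D(2)[OF r True]
     and c3 = aus_rep_D(1)[OF r bc] and c4 = aus_rep_D(2)[OF r bc]
    have z: "mM (PA b) * mM (MA a) = 0\<^sub>m (dM (AV b)) (dM (AV a))"
      using aus_rep_D(4)[OF r aus_I_cyc[OF rel True bc]] by simp
    have "mM (MA b) * mM (PA b) * (mM (MA a) * mM (PA a))
        = mM (MA b) * (mM (PA b) * mM (MA a)) * mM (PA a)"
      using c1 c2 c3 c4 ab by (intro assoc4) auto
    also have "\<dots> = 0\<^sub>m (dM (QV (t b))) (dM (QV (s a)))" using z c1 c4 by simp
    finally show ?thesis using True bc unfolding Rm_def Rd_def by simp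
  next
    case False
    hence bc: "b \<notin> CA E s t I" using cyc_rel_closed[OF g rel] by simp
    show ?thesis using aus_rep_D(4)[OF r aus_I_ncyc[OF rel ab(1,2) False bc]] False bc
      unfolding Rm_def Rd_def by simp
  qed
  thus "case x of (b, a) \<Rightarrow> Rm (CA E s t I) mM b * Rm (CA E s t I) mM a = 0\<^sub>m (Rd dM (t b)) (Rd dM (s a))"
    using ba by simp
qed

lemma R_hom:
  assumes g: "gentle V E s t I"
    and r1: "is_rep (aus_V V E s t I) (aus_E E s t I) (aus_s s) (aus_t t) J dM mM"
    and r2: "is_rep (aus_V V E s t I) (aus_E E s t I) (aus_s s) (aus_t t) J dN mN"
    and h: "is_hom (aus_V V E s t I) (aus_E E s t I) (aus_s s) (aus_t t) dM mM dN mN f"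
  shows "is_hom V E s t (Rd dM) (Rm (CA E s t I) mM) (Rd dN) (Rm (CA E s t I) mN) (\<lambda>i. f (QV i))"
  unfolding is_hom_def
proof (intro conjI ballI)
  fix i assume "i \<in> V" thus "f (QV i) \<in> carrier_mat (Rd dN i) (Rd dM i)"
    using aus_hom_D(2)[OF h] unfolding Rd_def by auto
next
  fix e assume e: "e \<in> E"
  have st: "s e \<in> V" "t e \<in> V" using gentle_st[OF g e] by auto
  show "f (QV (t e)) * Rm (CA E s t I) mM e = Rm (CA E s t I) mN e * f (QV (s e))"
  proof (cases "e \<in> CA E s t I")
    case True
    note c1 = aus_rep_D(1)[OF r1 True] and c2 = aus_rep_D(2)[OF r1 True]
     and c3 = aus_rep_D(1)[OF r2 True] and c4 = aus_rep_D(2)[OF r2 True]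
     and f1 = aus_hom_D(1)[OF h True] and f2 = aus_hom_D(2)[OF h st(1)] and f3 = aus_hom_D(2)[OF h st(2)]
    have "f (QV (t e)) * (mM (MA e) * mM (PA e)) = (f (QV (t e)) * mM (MA e)) * mM (PA e)"
      using c1 c2 f3 by (simp add: assoc_mult_mat)
    also have "\<dots> = (mN (MA e) * f (AV e)) * mM (PA e)" using aus_hom_D(4)[OF h True] by simp
    also have "\<dots> = mN (MA e) * (f (AV e) * mM (PA e))" using c4 f1 c1 by (simp add: assoc_mult_mat)
    also have "\<dots> = mN (MA e) * (mN (PA e) * f (QV (s e)))" using aus_hom_D(3)[OF h True] by simp
    also have "\<dots> = (mN (MA e) * mN (PA e)) * f (QV (s e))" using c3 c4 f2 by (simp add: assoc_mult_mat)
    finally show ?thesis using True unfolding Rm_def by simp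
  next
    case False thus ?thesis using aus_hom_D(5)[OF h e False] unfolding Rm_def by simp
  qed
qed

lemma hom_cong:
  assumes "is_hom V E s t d1 m1 d1' m1' f"
    "\<forall>i\<in>V. d1 i = d2 i" "\<forall>i\<in>V. d1' i = d2' i" "\<forall>e\<in>E. m1 e = m2 e" "\<forall>e\<in>E. m1' e = m2' e"
  shows "is_hom V E s t d2 m2 d2' m2' f"
  using assms unfolding is_hom_def by auto

lemma rep_cong:
  assumes "is_rep V E s t I d1 m1" "gentle V E s t I"
    "\<forall>i\<in>V. d1 i = d2 i" "\<forall>e\<in>E. m1 e = m2 e"
  shows "is_rep V E s t I d2 m2"
  unfolding is_rep_def
proof (intro conjI ballI)
  fix e assume e: "e \<in> E"
  thus "m2 e \<in> carrier_mat (d2 (t e)) (d2 (s e))" using assms gentle_st[OF assms(2) e]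
    unfolding is_rep_def by auto
next
  fix x assume x: "x \<in> I"
  obtain b a where ba: "x = (b, a)" by (cases x)
  have rel: "(b, a) \<in> I" using x ba by simp
  have ab: "a \<in> E" "b \<in> E" "t a = s b" using gentle_I[OF assms(2) rel] by auto
  have "t b \<in> V" "s a \<in> V" using gentle_st[OF assms(2)] ab by auto
  thus "case x of (b, a) \<Rightarrow> m2 b * m2 a = 0\<^sub>m (d2 (t b)) (d2 (s a))"
    using assms(1,3,4) rel ab ba unfolding is_rep_def by auto
qed

lemma Phi_D:
  assumes "is_Phi_image V E s t I d m d' m'"
  shows "i \<in> V \<Longrightarrow> d' (QV i) = d i"
    and "e \<in> E \<Longrightarrow> e \<notin> CA E s t I \<Longrightarrow> m' (NA e) = m e"
    and "\<alpha> \<in> CA E s t I \<Longrightarrow> m' (PA \<alpha>) \<in> carrier_mat (d' (AV \<alpha>)) (d (s \<alpha>))"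
    and "\<alpha> \<in> CA E s t I \<Longrightarrow> m' (MA \<alpha>) \<in> carrier_mat (d (t \<alpha>)) (d' (AV \<alpha>))"
    and "\<alpha> \<in> CA E s t I \<Longrightarrow> mat_surj (m' (PA \<alpha>))"
    and "\<alpha> \<in> CA E s t I \<Longrightarrow> mat_inj (m' (MA \<alpha>))"
    and "\<alpha> \<in> CA E s t I \<Longrightarrow> m' (MA \<alpha>) * m' (PA \<alpha>) = m \<alpha>"
  using assms unfolding is_Phi_image_def by auto

lemma Phi_R:
  assumes "is_Phi_image V E s t I d m d' m'"
  shows "\<forall>i\<in>V. Rd d' i = d i" "\<forall>e\<in>E. Rm (CA E s t I) m' e = m e"
  using Phi_D[OF assms] unfolding Rd_def Rm_def by auto

lemma Phi_rep:
  assumes g: "gentle V E s t I" and r: "is_rep V E s t I d m"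
    and P: "is_Phi_image V E s t I d m d' m'"
  shows "is_rep (aus_V V E s t I) (aus_E E s t I) (aus_s s) (aus_t t) (aus_I E s t I) d' m'"
  unfolding is_rep_def
proof (intro conjI ballI)
  fix x assume "x \<in> aus_E E s t I"
  then consider (N) e where "x = NA e" "e \<in> E" "e \<notin> CA E s t I"
    | (P) e where "x = PA e" "e \<in> CA E s t I" | (M) e where "x = MA e" "e \<in> CA E s t I"
    unfolding aus_E_def by auto
  thus "m' x \<in> carrier_mat (d' (aus_t t x)) (d' (aus_s s x))"
  proof cases
    case (N e)
    have "m e \<in> carrier_mat (d (t e)) (d (s e))" using r N(2) unfolding is_rep_def by blast
    thus ?thesis using Phi_D(1)[OF P] Phi_D(2)[OF P N(2,3)] gentle_st[OF g N(2)] N(1) by simp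
  next
    case (P e)
    have "e \<in> E" using cyc_sub[THEN subsetD, OF P(2)] .
    hence "s e \<in> V" using gentle_st[OF g] by simp
    thus ?thesis using Phi_D(3)[OF assms(3) P(2)] Phi_D(1)[OF assms(3) \<open>s e \<in> V\<close>] P(1) by simp
  next
    case (M e)
    have "e \<in> E" using cyc_sub[THEN subsetD, OF M(2)] .
    hence "t e \<in> V" using gentle_st[OF g] by simp
    thus ?thesis using Phi_D(4)[OF assms(3) M(2)] Phi_D(1)[OF assms(3) \<open>t e \<in> V\<close>] M(1) by simp
  qed
next
  fix x assume "x \<in> aus_I E s t I"
  then consider (C) a b where "x = (PA b, MA a)" "(b, a) \<in> I" "a \<in> CA E s t I" "b \<in> CA E s t I"
    | (N) a b where "x = (NA b, NA a)" "(b, a) \<in> I" "a \<in> E" "a \<notin> CA E s t I" "b \<in> E" "b \<notin> CA E s t I"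
    unfolding aus_I_def by auto
  thus "case x of (y, z) \<Rightarrow> m' y * m' z = 0\<^sub>m (d' (aus_t t y)) (d' (aus_s s z))"
  proof cases
    case (C a b)
    have ab: "t a = s b" using gentle_I[OF g C(2)] by simp
    note c1 = Phi_D(3)[OF P C(3)] and c2 = Phi_D(4)[OF P C(3)]
      and c3 = Phi_D(3)[OF P C(4)] and c4 = Phi_D(4)[OF P C(4)]
    have "m b * m a = 0\<^sub>m (d (t b)) (d (s a))" using r C(2) unfolding is_rep_def by auto
    hence "m' (MA b) * m' (PA b) * (m' (MA a) * m' (PA a)) = 0\<^sub>m (d (t b)) (d (s a))"
      using Phi_D(7)[OF P] C by simp
    moreover have "m' (MA b) * m' (PA b) * (m' (MA a) * m' (PA a)) = m' (MA b) * (m' (PA b) * m' (MA a)) * m' (PA a)"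
      using c1 c2 c3 c4 ab by (intro assoc4) auto
    moreover have "m' (MA b) * ((m' (PA b) * m' (MA a)) * m' (PA a)) = m' (MA b) * (m' (PA b) * m' (MA a)) * m' (PA a)"
      using c1 c2 c3 c4 ab by (intro assoc_mult_mat[symmetric]) auto
    moreover have "m' (MA b) * 0\<^sub>m (d' (AV b)) (d (s a)) = 0\<^sub>m (d (t b)) (d (s a))"
      using c4 by simp
    ultimately have e1: "m' (MA b) * ((m' (PA b) * m' (MA a)) * m' (PA a)) = m' (MA b) * 0\<^sub>m (d' (AV b)) (d (s a))"
      by simp
    have x1: "(m' (PA b) * m' (MA a)) * m' (PA a) \<in> carrier_mat (d' (AV b)) (d (s a))"
      using c1 c2 c3 ab by auto
    have e2: "(m' (PA b) * m' (MA a)) * m' (PA a) = 0\<^sub>m (d' (AV b)) (d (s a))"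
      using inj_cancel_left[OF c4 Phi_D(6)[OF P C(4)] x1 _ e1] by simp
    have e3: "(m' (PA b) * m' (MA a)) * m' (PA a) = 0\<^sub>m (d' (AV b)) (d' (AV a)) * m' (PA a)"
      using c1 e2 by simp
    have x2: "m' (PA b) * m' (MA a) \<in> carrier_mat (d' (AV b)) (d' (AV a))" using c2 c3 ab by auto
    have "m' (PA b) * m' (MA a) = 0\<^sub>m (d' (AV b)) (d' (AV a))"
      using surj_cancel_right[OF c1 Phi_D(5)[OF P C(3)] x2 _ e3] by simp
    thus ?thesis using C by simp
  next
    case (N a b)
    have "m b * m a = 0\<^sub>m (d (t b)) (d (s a))" using r N(2) unfolding is_rep_def by auto
    moreover have "t b \<in> V" "s a \<in> V" using gentle_st[OF g] N by auto
    ultimately show ?thesis using N Phi_D(1,2)[OF P] by simp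
  qed
qed

lemma assoc4b:
  fixes A :: "'a::semiring_1 mat"
  assumes a: "A \<in> carrier_mat n1 n2" and b: "B \<in> carrier_mat n2 n3"
    and c: "C \<in> carrier_mat n3 n4" and d: "D \<in> carrier_mat n4 n5"
  shows "A * ((B * C) * D) = (A * B) * (C * D)"
proof -
  have bc: "B * C \<in> carrier_mat n2 n4" using b c by auto
  have "A * ((B * C) * D) = (A * (B * C)) * D" by (rule assoc_mult_mat[OF a bc d, symmetric])
  also have "\<dots> = (A * B) * (C * D)" by (rule assoc4[OF a b c d, symmetric])
  finally show ?thesis .
qed

lemma mat_vec_zero: "(A :: 'a::field mat) \<in> carrier_mat n m \<Longrightarrow> A *\<^sub>v 0\<^sub>v m = 0\<^sub>v n"
  by (rule eq_vecI) (auto simp: scalar_prod_def)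

lemma zero_mat_vec: "v \<in> carrier_vec m \<Longrightarrow> (0\<^sub>m n m :: 'a::field mat) *\<^sub>v v = 0\<^sub>v n"
  by (rule eq_vecI) (auto simp: scalar_prod_def)

lemma proj_Phi:
  fixes m :: "'e \<Rightarrow> 'a::field mat" and V :: "'v set" and E :: "'e set"
  assumes g: "gentle V E s t I" and pr: "projective_rep V E s t I d m"
    and P: "is_Phi_image V E s t I d m d' m'"
    and ex: "\<And>\<alpha> \<gamma> x. \<alpha> \<in> CA E s t I \<Longrightarrow> (\<alpha>, \<gamma>) \<in> I \<Longrightarrow> x \<in> carrier_vec (d (s \<alpha>))
        \<Longrightarrow> m \<alpha> *\<^sub>v x = 0\<^sub>v (d (t \<alpha>)) \<Longrightarrow> \<exists>y\<in>carrier_vec (d (s \<gamma>)). m \<gamma> *\<^sub>v y = x"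
  shows "projective_rep (aus_V V E s t I) (aus_E E s t I) (aus_s s) (aus_t t) (aus_I E s t I) d' m'"
proof -
  let ?C = "CA E s t I"
  have rP: "is_rep V E s t I d m" using pr unfolding projective_rep_def by blast
  have rep': "is_rep (aus_V V E s t I) (aus_E E s t I) (aus_s s) (aus_t t) (aus_I E s t I) d' m'"
    by (rule Phi_rep[OF g rP P])
  have mc: "m e \<in> carrier_mat (d (t e)) (d (s e))" if "e \<in> E" for e
    using rP that unfolding is_rep_def by blast
  have cE: "\<alpha> \<in> E" if "\<alpha> \<in> ?C" for \<alpha> using cyc_sub[THEN subsetD, OF that] .
  have stV: "s e \<in> V" "t e \<in> V" if "e \<in> E" for e using gentle_st[OF g that] by auto
  show ?thesis unfolding projective_rep_def
  proof (intro conjI allI impI)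
    show "is_rep (aus_V V E s t I) (aus_E E s t I) (aus_s s) (aus_t t) (aus_I E s t I) d' m'" by (rule rep')
    fix dM mM dN mN gg hh
    assume rM: "is_rep (aus_V V E s t I) (aus_E E s t I) (aus_s s) (aus_t t) (aus_I E s t I) dM (mM :: 'e aus_arr \<Rightarrow> 'a mat)"
      and rN: "is_rep (aus_V V E s t I) (aus_E E s t I) (aus_s s) (aus_t t) (aus_I E s t I) dN mN"
      and hg: "is_hom (aus_V V E s t I) (aus_E E s t I) (aus_s s) (aus_t t) dM mM dN mN gg"
      and sg: "\<forall>i\<in>aus_V V E s t I. mat_surj (gg i)"
      and hh: "is_hom (aus_V V E s t I) (aus_E E s t I) (aus_s s) (aus_t t) d' m' dN mN hh"
    have RM: "is_rep V E s t I (Rd dM) (Rm ?C mM)" by (rule R_rep[OF g rM])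
    have RN: "is_rep V E s t I (Rd dN) (Rm ?C mN)" by (rule R_rep[OF g rN])
    have Rg: "is_hom V E s t (Rd dM) (Rm ?C mM) (Rd dN) (Rm ?C mN) (\<lambda>i. gg (QV i))"
      by (rule R_hom[OF g rM rN hg])
    have Rsg: "\<forall>i\<in>V. mat_surj (gg (QV i))" using sg unfolding aus_V_def by blast
    have Rh0: "is_hom V E s t (Rd d') (Rm ?C m') (Rd dN) (Rm ?C mN) (\<lambda>i. hh (QV i))"
      by (rule R_hom[OF g rep' rN hh])
    have Rh: "is_hom V E s t d m (Rd dN) (Rm ?C mN) (\<lambda>i. hh (QV i))"
      using hom_cong[OF Rh0] Phi_R[OF P] by simp
    have "\<forall>(dM :: 'v \<Rightarrow> nat) (mM :: 'e \<Rightarrow> 'a mat) dN mN g h.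
        is_rep V E s t I dM mM \<longrightarrow> is_rep V E s t I dN mN \<longrightarrow>
        is_hom V E s t dM mM dN mN g \<longrightarrow> (\<forall>i\<in>V. mat_surj (g i)) \<longrightarrow>
        is_hom V E s t d m dN mN h \<longrightarrow>
        (\<exists>k. is_hom V E s t d m dM mM k \<and> (\<forall>i\<in>V. g i * k i = h i))"
      using pr unfolding projective_rep_def by blast
    hence "\<exists>k. is_hom V E s t d m (Rd dM) (Rm ?C mM) k \<and> (\<forall>i\<in>V. gg (QV i) * k i = hh (QV i))"
      using RM RN Rg Rsg Rh by blast
    then obtain k0 where k0: "is_hom V E s t d m (Rd dM) (Rm ?C mM) k0"
      and k0g: "\<forall>i\<in>V. gg (QV i) * k0 i = hh (QV i)" by blast
    have k0c: "k0 i \<in> carrier_mat (dM (QV i)) (d i)" if "i \<in> V" for i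
      using k0 that unfolding is_hom_def Rd_def by blast
    have k0m: "k0 (t e) * m e = Rm ?C mM e * k0 (s e)" if "e \<in> E" for e
      using k0 that unfolding is_hom_def by blast
    note MPc = aus_rep_D(1)[OF rM] and MMc = aus_rep_D(2)[OF rM] and MNc = aus_rep_D(3)[OF rM]
    note PPc = Phi_D(3)[OF P] and PMc = Phi_D(4)[OF P]
    have exC: "\<exists>C \<in> carrier_mat (dM (AV \<alpha>)) (d' (AV \<alpha>)). C * m' (PA \<alpha>) = mM (PA \<alpha>) * k0 (s \<alpha>)"
      if a: "\<alpha> \<in> ?C" for \<alpha>
    proof (rule factor_surj[OF PPc[OF a] Phi_D(5)[OF P a]])
      have sa: "s \<alpha> \<in> V" using stV cE a by blast
      show B: "mM (PA \<alpha>) * k0 (s \<alpha>) \<in> carrier_mat (dM (AV \<alpha>)) (d (s \<alpha>))"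
        using MPc[OF a] k0c[OF sa] by auto
      fix x assume x: "x \<in> carrier_vec (d (s \<alpha>))" and x0: "m' (PA \<alpha>) *\<^sub>v x = 0\<^sub>v (d' (AV \<alpha>))"
      have "m \<alpha> *\<^sub>v x = m' (MA \<alpha>) *\<^sub>v (m' (PA \<alpha>) *\<^sub>v x)"
        using Phi_D(7)[OF P a] assoc_mult_mat_vec[OF PMc[OF a] PPc[OF a] x] by simp
      also have "\<dots> = 0\<^sub>v (d (t \<alpha>))" using x0 mat_vec_zero[OF PMc[OF a]] by simp
      finally have mx: "m \<alpha> *\<^sub>v x = 0\<^sub>v (d (t \<alpha>))" .
      obtain \<gamma> where gc: "\<gamma> \<in> ?C" and rel: "(\<alpha>, \<gamma>) \<in> I" using cyc_pred[OF a] by blast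
      have tg: "t \<gamma> = s \<alpha>" using gentle_I[OF g rel] by simp
      have gE: "\<gamma> \<in> E" using cE[OF gc] .
      have sg': "s \<gamma> \<in> V" using stV[OF gE] by simp
      obtain y where y: "y \<in> carrier_vec (d (s \<gamma>))" and my: "m \<gamma> *\<^sub>v y = x"
        using ex[OF a rel x mx] by blast
      have z: "mM (PA \<alpha>) * mM (MA \<gamma>) = 0\<^sub>m (dM (AV \<alpha>)) (dM (AV \<gamma>))"
        using aus_rep_D(4)[OF rM aus_I_cyc[OF rel gc a]] by simp
      note c1 = MPc[OF a] and c2 = k0c[OF sa] and c3 = mc[OF gE] and c4 = MMc[OF gc]
        and c5 = MPc[OF gc] and c6 = k0c[OF sg']
      have "(mM (PA \<alpha>) * k0 (s \<alpha>)) * m \<gamma> = mM (PA \<alpha>) * (k0 (t \<gamma>) * m \<gamma>)"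
        using c1 c2 c3 tg by (simp add: assoc_mult_mat)
      also have "\<dots> = mM (PA \<alpha>) * ((mM (MA \<gamma>) * mM (PA \<gamma>)) * k0 (s \<gamma>))"
        using k0m[OF gE] gc unfolding Rm_def by simp
      also have "\<dots> = (mM (PA \<alpha>) * mM (MA \<gamma>)) * (mM (PA \<gamma>) * k0 (s \<gamma>))"
        using c1 c4 c5 c6 tg by (intro assoc4b) auto
      also have "\<dots> = 0\<^sub>m (dM (AV \<alpha>)) (d (s \<gamma>))" using z c5 c6 by simp
      finally have Bz: "(mM (PA \<alpha>) * k0 (s \<alpha>)) * m \<gamma> = 0\<^sub>m (dM (AV \<alpha>)) (d (s \<gamma>))" .
      have "(mM (PA \<alpha>) * k0 (s \<alpha>)) *\<^sub>v x = ((mM (PA \<alpha>) * k0 (s \<alpha>)) * m \<gamma>) *\<^sub>v y"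
        using my assoc_mult_mat_vec[OF B _ y, of "m \<gamma>"] c3 tg by simp
      thus "(mM (PA \<alpha>) * k0 (s \<alpha>)) *\<^sub>v x = 0\<^sub>v (dM (AV \<alpha>))" using Bz zero_mat_vec[OF y] by simp
    qed
    define kk where "kk v = (case v of QV i \<Rightarrow> k0 i | AV \<alpha> \<Rightarrow>
       (SOME C. C \<in> carrier_mat (dM (AV \<alpha>)) (d' (AV \<alpha>)) \<and> C * m' (PA \<alpha>) = mM (PA \<alpha>) * k0 (s \<alpha>)))" for v
    have kA: "kk (AV \<alpha>) \<in> carrier_mat (dM (AV \<alpha>)) (d' (AV \<alpha>)) \<and> kk (AV \<alpha>) * m' (PA \<alpha>) = mM (PA \<alpha>) * k0 (s \<alpha>)"
      if a: "\<alpha> \<in> ?C" for \<alpha>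
      unfolding kk_def using exC[OF a] by (simp, metis (mono_tags, lifting) someI_ex)
    have kQ: "kk (QV i) = k0 i" for i unfolding kk_def by simp
    show "\<exists>k. is_hom (aus_V V E s t I) (aus_E E s t I) (aus_s s) (aus_t t) d' m' dM mM k \<and>
              (\<forall>i\<in>aus_V V E s t I. gg i * k i = hh i)"
    proof (intro exI conjI)
      show "is_hom (aus_V V E s t I) (aus_E E s t I) (aus_s s) (aus_t t) d' m' dM mM kk"
        unfolding is_hom_def
      proof (intro conjI ballI)
        fix v assume "v \<in> aus_V V E s t I"
        then consider (Q) i where "v = QV i" "i \<in> V" | (A) \<alpha> where "v = AV \<alpha>" "\<alpha> \<in> ?C"
          unfolding aus_V_def by blast
        thus "kk v \<in> carrier_mat (dM v) (d' v)"
        proof cases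
          case (Q i) thus ?thesis using kQ k0c[OF Q(2)] Phi_D(1)[OF P Q(2)] by simp
        next
          case (A \<alpha>) thus ?thesis using kA[OF A(2)] by simp
        qed
      next
        fix x assume "x \<in> aus_E E s t I"
        then consider (N) e where "x = NA e" "e \<in> E" "e \<notin> ?C"
          | (PP) e where "x = PA e" "e \<in> ?C" | (MM) e where "x = MA e" "e \<in> ?C"
          unfolding aus_E_def by blast
        thus "kk (aus_t t x) * m' x = mM x * kk (aus_s s x)"
        proof cases
          case (N e)
          thus ?thesis using k0m[OF N(2)] Phi_D(2)[OF P N(2,3)] kQ unfolding Rm_def by simp
        next
          case (PP e) thus ?thesis using kA[OF PP(2)] kQ by simp
        next
          case (MM \<alpha>)
          note a = MM(2)
          have aE: "\<alpha> \<in> E" using cE[OF a] .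
          have sa: "s \<alpha> \<in> V" and ta: "t \<alpha> \<in> V" using stV[OF aE] by auto
          note c1 = PPc[OF a] and c2 = PMc[OF a] and c3 = k0c[OF ta] and c4 = MMc[OF a]
            and c5 = MPc[OF a] and c6 = k0c[OF sa] and c7 = kA[OF a]
          have "(k0 (t \<alpha>) * m' (MA \<alpha>)) * m' (PA \<alpha>) = k0 (t \<alpha>) * m \<alpha>"
            using c1 c2 c3 Phi_D(7)[OF P a] by (simp add: assoc_mult_mat)
          also have "\<dots> = (mM (MA \<alpha>) * mM (PA \<alpha>)) * k0 (s \<alpha>)"
            using k0m[OF aE] a unfolding Rm_def by simp
          also have "\<dots> = mM (MA \<alpha>) * (mM (PA \<alpha>) * k0 (s \<alpha>))"
            using c4 c5 c6 by (simp add: assoc_mult_mat)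
          also have "\<dots> = mM (MA \<alpha>) * (kk (AV \<alpha>) * m' (PA \<alpha>))" using c7 by simp
          also have "\<dots> = (mM (MA \<alpha>) * kk (AV \<alpha>)) * m' (PA \<alpha>)"
            using c4 conjunct1[OF c7] c1 by (simp add: assoc_mult_mat)
          finally have eq: "(k0 (t \<alpha>) * m' (MA \<alpha>)) * m' (PA \<alpha>) = (mM (MA \<alpha>) * kk (AV \<alpha>)) * m' (PA \<alpha>)" .
          have "k0 (t \<alpha>) * m' (MA \<alpha>) = mM (MA \<alpha>) * kk (AV \<alpha>)"
            by (rule surj_cancel_right[OF c1 Phi_D(5)[OF P a] _ _ eq]) (use c2 c3 c4 c7 in auto)
          thus ?thesis using MM(1) kQ by simp
        qed
      qed
    next
      show "\<forall>i\<in>aus_V V E s t I. gg i * kk i = hh i"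
      proof
        fix v assume "v \<in> aus_V V E s t I"
        then consider (Q) i where "v = QV i" "i \<in> V" | (A) \<alpha> where "v = AV \<alpha>" "\<alpha> \<in> ?C"
          unfolding aus_V_def by blast
        thus "gg v * kk v = hh v"
        proof cases
          case (Q i) thus ?thesis using k0g kQ by simp
        next
          case (A \<alpha>)
          note a = A(2)
          have aE: "\<alpha> \<in> E" using cE[OF a] .
          have sa: "s \<alpha> \<in> V" using stV[OF aE] by auto
          note c1 = PPc[OF a] and c5 = MPc[OF a] and c6 = k0c[OF sa] and c7 = kA[OF a]
            and g1 = aus_hom_D(1)[OF hg a] and g2 = aus_hom_D(2)[OF hg sa]
            and h1 = aus_hom_D(1)[OF hh a] and h2 = aus_hom_D(2)[OF hh sa]
          have NPc: "mN (PA \<alpha>) \<in> carrier_mat (dN (AV \<alpha>)) (dN (QV (s \<alpha>)))"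
            using aus_rep_D(1)[OF rN a] .
          have "(gg (AV \<alpha>) * kk (AV \<alpha>)) * m' (PA \<alpha>) = gg (AV \<alpha>) * (kk (AV \<alpha>) * m' (PA \<alpha>))"
            using g1 conjunct1[OF c7] c1 by (simp add: assoc_mult_mat)
          also have "\<dots> = gg (AV \<alpha>) * (mM (PA \<alpha>) * k0 (s \<alpha>))" using c7 by simp
          also have "\<dots> = (gg (AV \<alpha>) * mM (PA \<alpha>)) * k0 (s \<alpha>)"
            using g1 c5 c6 by (simp add: assoc_mult_mat)
          also have "\<dots> = (mN (PA \<alpha>) * gg (QV (s \<alpha>))) * k0 (s \<alpha>)"
            using aus_hom_D(3)[OF hg a] by simp
          also have "\<dots> = mN (PA \<alpha>) * (gg (QV (s \<alpha>)) * k0 (s \<alpha>))"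
            using NPc g2 c6 by (simp add: assoc_mult_mat)
          also have "\<dots> = mN (PA \<alpha>) * hh (QV (s \<alpha>))" using k0g sa by simp
          also have "\<dots> = hh (AV \<alpha>) * m' (PA \<alpha>)" using aus_hom_D(3)[OF hh a] by simp
          finally have eq: "(gg (AV \<alpha>) * kk (AV \<alpha>)) * m' (PA \<alpha>) = hh (AV \<alpha>) * m' (PA \<alpha>)" .
          have "gg (AV \<alpha>) * kk (AV \<alpha>) = hh (AV \<alpha>)"
            by (rule surj_cancel_right[OF c1 Phi_D(5)[OF P a] _ _ eq]) (use g1 c7 h1 in auto)
          thus ?thesis using A(1) by simp
        qed
      qed
    qed
  qed
qed

lemma inj_Phi:
  fixes m :: "'e \<Rightarrow> 'a::field mat" and V :: "'v set" and E :: "'e set"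
  assumes g: "gentle V E s t I" and ij: "injective_rep V E s t I d m"
    and P: "is_Phi_image V E s t I d m d' m'"
    and ex: "\<And>\<alpha> \<beta> x. \<alpha> \<in> CA E s t I \<Longrightarrow> (\<beta>, \<alpha>) \<in> I \<Longrightarrow> x \<in> carrier_vec (d (t \<alpha>))
        \<Longrightarrow> m \<beta> *\<^sub>v x = 0\<^sub>v (d (t \<beta>)) \<Longrightarrow> \<exists>y\<in>carrier_vec (d (s \<alpha>)). m \<alpha> *\<^sub>v y = x"
  shows "injective_rep (aus_V V E s t I) (aus_E E s t I) (aus_s s) (aus_t t) (aus_I E s t I) d' m'"
proof -
  let ?C = "CA E s t I"
  have rP: "is_rep V E s t I d m" using ij unfolding injective_rep_def by blast
  have rep': "is_rep (aus_V V E s t I) (aus_E E s t I) (aus_s s) (aus_t t) (aus_I E s t I) d' m'"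
    by (rule Phi_rep[OF g rP P])
  have mc: "m e \<in> carrier_mat (d (t e)) (d (s e))" if "e \<in> E" for e
    using rP that unfolding is_rep_def by blast
  have cE: "\<alpha> \<in> E" if "\<alpha> \<in> ?C" for \<alpha> using cyc_sub[THEN subsetD, OF that] .
  have stV: "s e \<in> V" "t e \<in> V" if "e \<in> E" for e using gentle_st[OF g that] by auto
  show ?thesis unfolding injective_rep_def
  proof (intro conjI allI impI)
    show "is_rep (aus_V V E s t I) (aus_E E s t I) (aus_s s) (aus_t t) (aus_I E s t I) d' m'" by (rule rep')
    fix dM mM dN mN gg hh
    assume rM: "is_rep (aus_V V E s t I) (aus_E E s t I) (aus_s s) (aus_t t) (aus_I E s t I) dM (mM :: 'e aus_arr \<Rightarrow> 'a mat)"
      and rN: "is_rep (aus_V V E s t I) (aus_E E s t I) (aus_s s) (aus_t t) (aus_I E s t I) dN mN"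
      and hg: "is_hom (aus_V V E s t I) (aus_E E s t I) (aus_s s) (aus_t t) dM mM dN mN gg"
      and sg: "\<forall>i\<in>aus_V V E s t I. mat_inj (gg i)"
      and hh: "is_hom (aus_V V E s t I) (aus_E E s t I) (aus_s s) (aus_t t) dM mM d' m' hh"
    have RM: "is_rep V E s t I (Rd dM) (Rm ?C mM)" by (rule R_rep[OF g rM])
    have RN: "is_rep V E s t I (Rd dN) (Rm ?C mN)" by (rule R_rep[OF g rN])
    have Rg: "is_hom V E s t (Rd dM) (Rm ?C mM) (Rd dN) (Rm ?C mN) (\<lambda>i. gg (QV i))"
      by (rule R_hom[OF g rM rN hg])
    have Rsg: "\<forall>i\<in>V. mat_inj (gg (QV i))" using sg unfolding aus_V_def by blast
    have Rh0: "is_hom V E s t (Rd dM) (Rm ?C mM) (Rd d') (Rm ?C m') (\<lambda>i. hh (QV i))"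
      by (rule R_hom[OF g rM rep' hh])
    have Rh: "is_hom V E s t (Rd dM) (Rm ?C mM) d m (\<lambda>i. hh (QV i))"
      using hom_cong[OF Rh0] Phi_R[OF P] by simp
    have "\<forall>(dM :: 'v \<Rightarrow> nat) (mM :: 'e \<Rightarrow> 'a mat) dN mN g h.
        is_rep V E s t I dM mM \<longrightarrow> is_rep V E s t I dN mN \<longrightarrow>
        is_hom V E s t dM mM dN mN g \<longrightarrow> (\<forall>i\<in>V. mat_inj (g i)) \<longrightarrow>
        is_hom V E s t dM mM d m h \<longrightarrow>
        (\<exists>k. is_hom V E s t dN mN d m k \<and> (\<forall>i\<in>V. k i * g i = h i))"
      using ij unfolding injective_rep_def by blast
    hence "\<exists>k. is_hom V E s t (Rd dN) (Rm ?C mN) d m k \<and> (\<forall>i\<in>V. k i * gg (QV i) = hh (QV i))"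
      using RM RN Rg Rsg Rh by blast
    then obtain k0 where k0: "is_hom V E s t (Rd dN) (Rm ?C mN) d m k0"
      and k0g: "\<forall>i\<in>V. k0 i * gg (QV i) = hh (QV i)" by blast
    have k0c: "k0 i \<in> carrier_mat (d i) (dN (QV i))" if "i \<in> V" for i
      using k0 that unfolding is_hom_def Rd_def by blast
    have k0m: "k0 (t e) * Rm ?C mN e = m e * k0 (s e)" if "e \<in> E" for e
      using k0 that unfolding is_hom_def by blast
    note NPc = aus_rep_D(1)[OF rN] and NMc = aus_rep_D(2)[OF rN]
    note PPc = Phi_D(3)[OF P] and PMc = Phi_D(4)[OF P]
    have exC: "\<exists>C \<in> carrier_mat (d' (AV \<alpha>)) (dN (AV \<alpha>)). m' (MA \<alpha>) * C = k0 (t \<alpha>) * mN (MA \<alpha>)"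
      if a: "\<alpha> \<in> ?C" for \<alpha>
    proof (rule factor_image[OF PMc[OF a]])
      have ta: "t \<alpha> \<in> V" using stV cE a by blast
      show B: "k0 (t \<alpha>) * mN (MA \<alpha>) \<in> carrier_mat (d (t \<alpha>)) (dN (AV \<alpha>))"
        using NMc[OF a] k0c[OF ta] by auto
      fix y :: "'a vec" assume y: "y \<in> carrier_vec (dN (AV \<alpha>))"
      obtain \<beta> where bc: "\<beta> \<in> ?C" and rel: "(\<beta>, \<alpha>) \<in> I" using cyc_succ[OF a] by blast
      have sb: "s \<beta> = t \<alpha>" using gentle_I[OF g rel] by simp
      have bE: "\<beta> \<in> E" using cE[OF bc] .
      have tb: "t \<beta> \<in> V" using stV[OF bE] by simp
      have z: "mN (PA \<beta>) * mN (MA \<alpha>) = 0\<^sub>m (dN (AV \<beta>)) (dN (AV \<alpha>))"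
        using aus_rep_D(4)[OF rN aus_I_cyc[OF rel a bc]] by simp
      note c1 = mc[OF bE] and c2 = k0c[OF ta] and c3 = NMc[OF a] and c4 = NMc[OF bc]
        and c5 = NPc[OF bc] and c6 = k0c[OF tb]
      have "m \<beta> * (k0 (t \<alpha>) * mN (MA \<alpha>)) = (m \<beta> * k0 (s \<beta>)) * mN (MA \<alpha>)"
        using c1 c2 c3 sb by (simp add: assoc_mult_mat)
      also have "\<dots> = (k0 (t \<beta>) * (mN (MA \<beta>) * mN (PA \<beta>))) * mN (MA \<alpha>)"
        using k0m[OF bE] bc unfolding Rm_def by simp
      also have "\<dots> = (k0 (t \<beta>) * mN (MA \<beta>)) * (mN (PA \<beta>) * mN (MA \<alpha>))"
        using c6 c4 c5 c3 sb by (intro assoc4[symmetric]) auto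
      also have "\<dots> = 0\<^sub>m (d (t \<beta>)) (dN (AV \<alpha>))" using z c6 c4 by simp
      finally have Bz: "m \<beta> * (k0 (t \<alpha>) * mN (MA \<alpha>)) = 0\<^sub>m (d (t \<beta>)) (dN (AV \<alpha>))" .
      have xc: "(k0 (t \<alpha>) * mN (MA \<alpha>)) *\<^sub>v y \<in> carrier_vec (d (t \<alpha>))" using B y by auto
      have "m \<beta> *\<^sub>v ((k0 (t \<alpha>) * mN (MA \<alpha>)) *\<^sub>v y) = (m \<beta> * (k0 (t \<alpha>) * mN (MA \<alpha>))) *\<^sub>v y"
        using assoc_mult_mat_vec[OF _ B y, of "m \<beta>"] c1 sb by simp
      also have "\<dots> = 0\<^sub>v (d (t \<beta>))" using Bz zero_mat_vec[OF y] by simp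
      finally have x0: "m \<beta> *\<^sub>v ((k0 (t \<alpha>) * mN (MA \<alpha>)) *\<^sub>v y) = 0\<^sub>v (d (t \<beta>))" .
      obtain w where w: "w \<in> carrier_vec (d (s \<alpha>))" and mw: "m \<alpha> *\<^sub>v w = (k0 (t \<alpha>) * mN (MA \<alpha>)) *\<^sub>v y"
        using ex[OF a rel xc x0] by blast
      have "m' (MA \<alpha>) *\<^sub>v (m' (PA \<alpha>) *\<^sub>v w) = m \<alpha> *\<^sub>v w"
        using Phi_D(7)[OF P a] assoc_mult_mat_vec[OF PMc[OF a] PPc[OF a] w] by simp
      moreover have "m' (PA \<alpha>) *\<^sub>v w \<in> carrier_vec (d' (AV \<alpha>))" using PPc[OF a] w by auto
      ultimately show "\<exists>x\<in>carrier_vec (d' (AV \<alpha>)). m' (MA \<alpha>) *\<^sub>v x = (k0 (t \<alpha>) * mN (MA \<alpha>)) *\<^sub>v y"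
        using mw by metis
    qed
    define kk where "kk v = (case v of QV i \<Rightarrow> k0 i | AV \<alpha> \<Rightarrow>
       (SOME C. C \<in> carrier_mat (d' (AV \<alpha>)) (dN (AV \<alpha>)) \<and> m' (MA \<alpha>) * C = k0 (t \<alpha>) * mN (MA \<alpha>)))" for v
    have kA: "kk (AV \<alpha>) \<in> carrier_mat (d' (AV \<alpha>)) (dN (AV \<alpha>)) \<and> m' (MA \<alpha>) * kk (AV \<alpha>) = k0 (t \<alpha>) * mN (MA \<alpha>)"
      if a: "\<alpha> \<in> ?C" for \<alpha>
      unfolding kk_def using exC[OF a] by (simp, metis (mono_tags, lifting) someI_ex)
    have kQ: "kk (QV i) = k0 i" for i unfolding kk_def by simp
    show "\<exists>k. is_hom (aus_V V E s t I) (aus_E E s t I) (aus_s s) (aus_t t) dN mN d' m' k \<and>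
              (\<forall>i\<in>aus_V V E s t I. k i * gg i = hh i)"
    proof (intro exI conjI)
      show "is_hom (aus_V V E s t I) (aus_E E s t I) (aus_s s) (aus_t t) dN mN d' m' kk"
        unfolding is_hom_def
      proof (intro conjI ballI)
        fix v assume "v \<in> aus_V V E s t I"
        then consider (Q) i where "v = QV i" "i \<in> V" | (A) \<alpha> where "v = AV \<alpha>" "\<alpha> \<in> ?C"
          unfolding aus_V_def by blast
        thus "kk v \<in> carrier_mat (d' v) (dN v)"
        proof cases
          case (Q i) thus ?thesis using kQ k0c[OF Q(2)] Phi_D(1)[OF P Q(2)] by simp
        next
          case (A \<alpha>) thus ?thesis using kA[OF A(2)] by simp
        qed
      next
        fix x assume "x \<in> aus_E E s t I"
        then consider (N) e where "x = NA e" "e \<in> E" "e \<notin> ?C"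
          | (PP) e where "x = PA e" "e \<in> ?C" | (MM) e where "x = MA e" "e \<in> ?C"
          unfolding aus_E_def by blast
        thus "kk (aus_t t x) * mN x = m' x * kk (aus_s s x)"
        proof cases
          case (N e)
          thus ?thesis using k0m[OF N(2)] Phi_D(2)[OF P N(2,3)] kQ unfolding Rm_def by simp
        next
          case (MM e) thus ?thesis using kA[OF MM(2)] kQ by simp
        next
          case (PP \<alpha>)
          note a = PP(2)
          have aE: "\<alpha> \<in> E" using cE[OF a] .
          have sa: "s \<alpha> \<in> V" and ta: "t \<alpha> \<in> V" using stV[OF aE] by auto
          note c1 = PPc[OF a] and c2 = PMc[OF a] and c3 = k0c[OF ta] and c4 = NMc[OF a]
            and c5 = NPc[OF a] and c6 = k0c[OF sa] and c7 = kA[OF a]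
          have c7c: "kk (AV \<alpha>) \<in> carrier_mat (d' (AV \<alpha>)) (dN (AV \<alpha>))" using c7 by blast
          have "m' (MA \<alpha>) * (kk (AV \<alpha>) * mN (PA \<alpha>)) = (m' (MA \<alpha>) * kk (AV \<alpha>)) * mN (PA \<alpha>)"
            using c2 c7c c5 by (simp add: assoc_mult_mat)
          also have "\<dots> = (k0 (t \<alpha>) * mN (MA \<alpha>)) * mN (PA \<alpha>)" using c7 by simp
          also have "\<dots> = k0 (t \<alpha>) * (mN (MA \<alpha>) * mN (PA \<alpha>))"
            using c3 c4 c5 by (simp add: assoc_mult_mat)
          also have "\<dots> = m \<alpha> * k0 (s \<alpha>)" using k0m[OF aE] a unfolding Rm_def by simp
          also have "\<dots> = (m' (MA \<alpha>) * m' (PA \<alpha>)) * k0 (s \<alpha>)" using Phi_D(7)[OF P a] by simp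
          also have "\<dots> = m' (MA \<alpha>) * (m' (PA \<alpha>) * k0 (s \<alpha>))"
            using c2 c1 c6 by (simp add: assoc_mult_mat)
          finally have eq: "m' (MA \<alpha>) * (kk (AV \<alpha>) * mN (PA \<alpha>)) = m' (MA \<alpha>) * (m' (PA \<alpha>) * k0 (s \<alpha>))" .
          have x1: "kk (AV \<alpha>) * mN (PA \<alpha>) \<in> carrier_mat (d' (AV \<alpha>)) (dN (QV (s \<alpha>)))"
            using c7c c5 by auto
          have x2: "m' (PA \<alpha>) * k0 (s \<alpha>) \<in> carrier_mat (d' (AV \<alpha>)) (dN (QV (s \<alpha>)))"
            using c1 c6 by auto
          have "kk (AV \<alpha>) * mN (PA \<alpha>) = m' (PA \<alpha>) * k0 (s \<alpha>)"
            using inj_cancel_left[OF c2 Phi_D(6)[OF P a] x1 x2 eq] .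
          thus ?thesis using PP(1) kQ by simp
        qed
      qed
    next
      show "\<forall>i\<in>aus_V V E s t I. kk i * gg i = hh i"
      proof
        fix v assume "v \<in> aus_V V E s t I"
        then consider (Q) i where "v = QV i" "i \<in> V" | (A) \<alpha> where "v = AV \<alpha>" "\<alpha> \<in> ?C"
          unfolding aus_V_def by blast
        thus "kk v * gg v = hh v"
        proof cases
          case (Q i) thus ?thesis using k0g kQ by simp
        next
          case (A \<alpha>)
          note a = A(2)
          have aE: "\<alpha> \<in> E" using cE[OF a] .
          have ta: "t \<alpha> \<in> V" using stV[OF aE] by auto
          note c2 = PMc[OF a] and c3 = k0c[OF ta] and c4 = NMc[OF a] and c7 = kA[OF a]
            and g1 = aus_hom_D(1)[OF hg a] and g2 = aus_hom_D(2)[OF hg ta]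
            and h1 = aus_hom_D(1)[OF hh a]
          have c7c: "kk (AV \<alpha>) \<in> carrier_mat (d' (AV \<alpha>)) (dN (AV \<alpha>))" using c7 by blast
          have MMc: "mM (MA \<alpha>) \<in> carrier_mat (dM (QV (t \<alpha>))) (dM (AV \<alpha>))"
            using aus_rep_D(2)[OF rM a] .
          have "m' (MA \<alpha>) * (kk (AV \<alpha>) * gg (AV \<alpha>)) = (m' (MA \<alpha>) * kk (AV \<alpha>)) * gg (AV \<alpha>)"
            using c2 c7c g1 by (simp add: assoc_mult_mat)
          also have "\<dots> = (k0 (t \<alpha>) * mN (MA \<alpha>)) * gg (AV \<alpha>)" using c7 by simp
          also have "\<dots> = k0 (t \<alpha>) * (mN (MA \<alpha>) * gg (AV \<alpha>))"
            using c3 c4 g1 by (simp add: assoc_mult_mat)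
          also have "\<dots> = k0 (t \<alpha>) * (gg (QV (t \<alpha>)) * mM (MA \<alpha>))"
            using aus_hom_D(4)[OF hg a] by simp
          also have "\<dots> = (k0 (t \<alpha>) * gg (QV (t \<alpha>))) * mM (MA \<alpha>)"
            using c3 g2 MMc by (simp add: assoc_mult_mat)
          also have "\<dots> = hh (QV (t \<alpha>)) * mM (MA \<alpha>)" using k0g ta by simp
          also have "\<dots> = m' (MA \<alpha>) * hh (AV \<alpha>)" using aus_hom_D(4)[OF hh a] by simp
          finally have eq: "m' (MA \<alpha>) * (kk (AV \<alpha>) * gg (AV \<alpha>)) = m' (MA \<alpha>) * hh (AV \<alpha>)" .
          have x1: "kk (AV \<alpha>) * gg (AV \<alpha>) \<in> carrier_mat (d' (AV \<alpha>)) (dM (AV \<alpha>))"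
            using c7c g1 by auto
          have "kk (AV \<alpha>) * gg (AV \<alpha>) = hh (AV \<alpha>)"
            using inj_cancel_left[OF c2 Phi_D(6)[OF P a] x1 h1 eq] .
          thus ?thesis using A(1) by simp
        qed
      qed
    qed
  qed
qed

definition mat01 :: "nat \<Rightarrow> nat \<Rightarrow> (nat \<Rightarrow> nat \<Rightarrow> bool) \<Rightarrow> 'a::field mat" where
  "mat01 nr nc R = mat nr nc (\<lambda>(r, c). if R r c then 1 else 0)"

lemma mat01_vec_sum:
  assumes "r < nr" "v \<in> carrier_vec nc"
  shows "((mat01 nr nc R :: 'a::field mat) *\<^sub>v v) $ r = (\<Sum>k\<in>{0..<nc}. (if R r k then v $ k else 0))"
proof -
  have "((mat01 nr nc R :: 'a mat) *\<^sub>v v) $ r = row (mat01 nr nc R) r \<bullet> v"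
    using assms unfolding mat01_def by (simp add: index_mult_mat_vec)
  also have "row (mat01 nr nc R :: 'a mat) r = vec nc (\<lambda>k. if R r k then 1 else 0)"
    using assms unfolding mat01_def by (simp add: row_mat)
  also have "vec nc (\<lambda>k. if R r k then 1 else 0) \<bullet> v = (\<Sum>k\<in>{0..<nc}. (if R r k then 1 else 0) * v $ k)"
    using assms unfolding scalar_prod_def by simp
  also have "\<dots> = (\<Sum>k\<in>{0..<nc}. (if R r k then v $ k else 0))"
    by (rule sum.cong) auto
  finally show ?thesis .
qed
lemma mat01_vec1:
  assumes "r < nr" "c < nc" "R r c" "\<And>c'. c' < nc \<Longrightarrow> R r c' \<Longrightarrow> c' = c" "v \<in> carrier_vec nc"
  shows "((mat01 nr nc R :: 'a::field mat) *\<^sub>v v) $ r = v $ c"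
proof -
  have "(\<Sum>k\<in>{0..<nc}. (if R r k then v $ k else 0)) = (\<Sum>k\<in>{0..<nc}. (if k = c then v $ k else 0))"
  proof (rule sum.cong)
    fix k assume "k \<in> {0..<nc}"
    hence k: "k < nc" by simp
    show "(if R r k then v $ k else 0) = (if k = c then v $ k else 0)"
    proof (cases "R r k")
      case True thus ?thesis using assms(4)[OF k] by simp
    next
      case False thus ?thesis using assms(3) by (cases "k = c") simp_all
    qed
  qed simp
  also have "\<dots> = v $ c" using assms(2) by simp
  finally show ?thesis using mat01_vec_sum[OF assms(1,5)] by simp
qed

lemma mat01_vec0:
  assumes "r < nr" "\<And>c. c < nc \<Longrightarrow> \<not> R r c" "v \<in> carrier_vec nc"
  shows "((mat01 nr nc R :: 'a::field mat) *\<^sub>v v) $ r = 0"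
proof -
  have "(\<Sum>k\<in>{0..<nc}. (if R r k then v $ k else 0)) = (\<Sum>k\<in>{0..<nc}. (0::'a))"
    by (rule sum.cong) (simp_all add: assms(2))
  thus ?thesis using mat01_vec_sum[OF assms(1,3)] by simp
qed

lemma mat01_col1:
  assumes "r < nr" "c < nc" "R r c" "\<And>r'. r' < nr \<Longrightarrow> R r' c \<Longrightarrow> r' = r"
  shows "col (mat01 nr nc R :: 'a::field mat) c = unit_vec nr r"
proof (rule eq_vecI)
  fix i assume "i < dim_vec (unit_vec nr r :: 'a vec)"
  hence i: "i < nr" by simp
  have "col (mat01 nr nc R :: 'a mat) c $ i = (if R i c then 1 else 0)"
    using i assms(2) unfolding mat01_def by (simp add: col_mat)
  also have "\<dots> = unit_vec nr r $ i"
  proof (cases "R i c")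
    case True thus ?thesis using assms(4)[OF i] i by (simp add: unit_vec_def)
  next
    case False thus ?thesis using assms(3) i by (cases "i = r") (simp_all add: unit_vec_def)
  qed
  finally show "col (mat01 nr nc R :: 'a mat) c $ i = unit_vec nr r $ i" .
qed (use assms(1,2) in \<open>simp add: mat01_def col_mat\<close>)

lemma mat01_col0:
  assumes "c < nc" "\<And>r. r < nr \<Longrightarrow> \<not> R r c"
  shows "col (mat01 nr nc R :: 'a::field mat) c = 0\<^sub>v nr"
proof (rule eq_vecI)
  fix i assume "i < dim_vec (0\<^sub>v nr :: 'a vec)"
  hence i: "i < nr" by simp
  show "col (mat01 nr nc R :: 'a mat) c $ i = 0\<^sub>v nr $ i"
    using i assms(1) assms(2)[OF i] unfolding mat01_def by (simp add: col_mat)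
qed (use assms(1) in \<open>simp add: mat01_def col_mat\<close>)

definition idx :: "'b list \<Rightarrow> 'b \<Rightarrow> nat" where
  "idx xs b = (THE r. r < length xs \<and> xs ! r = b)"

lemma idx_props: assumes "distinct xs" "b \<in> set xs" shows "idx xs b < length xs \<and> xs ! idx xs b = b"
proof -
  have "\<exists>!r. r < length xs \<and> xs ! r = b" using distinct_Ex1[OF assms] .
  thus ?thesis unfolding idx_def by (rule theI')
qed

lemma idx_nth: assumes "distinct xs" "r < length xs" shows "idx xs (xs ! r) = r"
proof -
  have "idx xs (xs ! r) < length xs \<and> xs ! idx xs (xs ! r) = xs ! r" using idx_props[OF assms(1)] assms(2) by simp
  thus ?thesis using nth_eq_iff_index_eq[OF assms(1)] assms(2) by blast
qed
lemma np_Nil: "nonzero_path E s t I []" unfolding nonzero_path_def by simp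
lemma np_single: "nonzero_path E s t I [e] \<longleftrightarrow> e \<in> E"
  unfolding nonzero_path_def by simp
lemma all_Suc_split: "(\<forall>i. Suc i < Suc n \<longrightarrow> Q i) \<longleftrightarrow> (0 < n \<longrightarrow> Q 0) \<and> (\<forall>k. Suc k < n \<longrightarrow> Q (Suc k))"
  apply (rule iffI)
   apply simp
  apply (intro allI impI)
  subgoal for i by (cases i) auto
  done
lemma np_CC: "nonzero_path E s t I (e # f # p) \<longleftrightarrow> e \<in> E \<and> t e = s f \<and> (f, e) \<notin> I \<and> nonzero_path E s t I (f # p)"
  unfolding nonzero_path_def
  apply (subst (1) length_Cons)
  apply (subst all_Suc_split)
  apply simp
  by blast
lemma np_Cons1:
  "nonzero_path E s t I (e # p) \<longleftrightarrow> nonzero_path E s t I p \<and> e \<in> E \<and>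
     (p \<noteq> [] \<longrightarrow> t e = s (hd p) \<and> (hd p, e) \<notin> I)"
  by (cases p) (auto simp: np_CC np_single np_Nil)
lemma np_append1:
  "nonzero_path E s t I (p @ [e]) \<longleftrightarrow> nonzero_path E s t I p \<and> e \<in> E \<and>
     (p \<noteq> [] \<longrightarrow> t (last p) = s e \<and> (e, last p) \<notin> I)"
proof (induction p)
  case Nil thus ?case by (simp add: np_single np_Nil)
next
  case (Cons a p)
  show ?case
  proof (cases p)
    case Nil thus ?thesis by (auto simp: np_CC np_single)
  next
    case (Cons f q)
    have "nonzero_path E s t I ((a # p) @ [e]) \<longleftrightarrow> a \<in> E \<and> t a = s f \<and> (f, a) \<notin> I \<and> nonzero_path E s t I (p @ [e])"
      using Cons by (simp add: np_CC)
    also have "\<dots> \<longleftrightarrow> a \<in> E \<and> t a = s f \<and> (f, a) \<notin> I \<and> nonzero_path E s t I p \<and> e \<in> E \<and>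
     (t (last p) = s e \<and> (e, last p) \<notin> I)" using Cons.IH Cons by simp
    also have "\<dots> \<longleftrightarrow> nonzero_path E s t I (a # p) \<and> e \<in> E \<and> (t (last (a # p)) = s e \<and> (e, last (a # p)) \<notin> I)"
      using Cons by (auto simp: np_CC)
    finally show ?thesis by simp
  qed
qed

lemma mat01_carrier[simp]: "mat01 nr nc R \<in> carrier_mat nr nc"
  unfolding mat01_def by simp

lemma col_fun:
  assumes "distinct ys" "c < nc"
  shows "col (mat01 (length ys) nc (\<lambda>r c. ys ! r = F c) :: 'a::field mat) c =
    (if F c \<in> set ys then unit_vec (length ys) (idx ys (F c)) else 0\<^sub>v (length ys))"
proof (cases "F c \<in> set ys")
  case True
  note ip = idx_props[OF assms(1) True]
  have "col (mat01 (length ys) nc (\<lambda>r c. ys ! r = F c) :: 'a mat) c = unit_vec (length ys) (idx ys (F c))"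
  proof (rule mat01_col1)
    show "idx ys (F c) < length ys" "c < nc" "ys ! idx ys (F c) = F c" using ip assms by auto
    fix r' assume "r' < length ys" "ys ! r' = F c"
    thus "r' = idx ys (F c)" using ip nth_eq_iff_index_eq[OF assms(1)] by metis
  qed
  thus ?thesis using True by simp
next
  case False
  have "col (mat01 (length ys) nc (\<lambda>r c. ys ! r = F c) :: 'a mat) c = 0\<^sub>v (length ys)"
    by (rule mat01_col0) (use assms False nth_mem in metis)+
  thus ?thesis using False by simp
qed

lemma vec_fun1:
  assumes "distinct xs" "\<And>a b. f a = f b \<Longrightarrow> a = b" "r < nr" "c < length xs" "Y r = f (xs ! c)"
    "v \<in> carrier_vec (length xs)"
  shows "((mat01 nr (length xs) (\<lambda>r c. Y r = f (xs ! c)) :: 'a::field mat) *\<^sub>v v) $ r = v $ c"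
proof (rule mat01_vec1)
  fix c' assume "c' < length xs" "Y r = f (xs ! c')"
  hence "xs ! c' = xs ! c" using assms(2,5) by metis
  thus "c' = c" using nth_eq_iff_index_eq[OF assms(1)] assms(4) \<open>c' < length xs\<close> by blast
qed (use assms in auto)

lemma vec_fun0:
  assumes "r < nr" "\<And>c. c < length xs \<Longrightarrow> Y r \<noteq> f (xs ! c)" "v \<in> carrier_vec (length xs)"
  shows "((mat01 nr (length xs) (\<lambda>r c. Y r = f (xs ! c)) :: 'a::field mat) *\<^sub>v v) $ r = 0"
  by (rule mat01_vec0) (use assms in auto)

locale pcov =
  fixes V :: "'v set" and E :: "'e set" and s t :: "'e \<Rightarrow> 'v" and I :: "('e \<times> 'e) set"
    and d :: "'v \<Rightarrow> nat" and m :: "'e \<Rightarrow> 'a::field mat"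
  assumes g: "gentle V E s t I" and r: "is_rep V E s t I d m"
begin

definition npath :: "'v \<Rightarrow> 'e list \<Rightarrow> 'v \<Rightarrow> bool" where
  "npath i p j \<longleftrightarrow> nonzero_path E s t I p \<and> (if p = [] then i = j else s (hd p) = i \<and> t (last p) = j)"

definition B :: "'v \<Rightarrow> ('v \<times> 'e list \<times> nat) set" where
  "B j = {(i, p, c). i \<in> V \<and> npath i p j \<and> c < d i}"

lemma B_fin: "finite (B j)"
proof -
  obtain N where N: "\<forall>xs. nonzero_path E s t I xs \<longrightarrow> length xs \<le> N" using gentleD(6)[OF g] by blast
  have "B j \<subseteq> Sigma V (\<lambda>i. {p. set p \<subseteq> E \<and> length p \<le> N} \<times> {..<d i})"
    unfolding B_def npath_def nonzero_path_def using N unfolding nonzero_path_def by auto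
  moreover have "finite (Sigma V (\<lambda>i. {p. set p \<subseteq> E \<and> length p \<le> N} \<times> {..<d i}))"
    using gentleD(1,2)[OF g] finite_lists_length_le by (intro finite_SigmaI finite_cartesian_product) auto
  ultimately show ?thesis by (rule finite_subset)
qed

definition bs :: "'v \<Rightarrow> ('v \<times> 'e list \<times> nat) list" where
  "bs j = (SOME xs. distinct xs \<and> set xs = B j)"

lemma bs: "distinct (bs j) \<and> set (bs j) = B j"
proof -
  have "\<exists>xs. distinct xs \<and> set xs = B j" using finite_distinct_list[OF B_fin] by metis
  thus ?thesis unfolding bs_def by (rule someI_ex)
qed

definition nn :: "'v \<Rightarrow> nat" where "nn j = length (bs j)"

lemma bs_in: "c < nn j \<Longrightarrow> bs j ! c \<in> B j"
  using bs[of j] nth_mem unfolding nn_def by metis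

definition ext :: "'e \<Rightarrow> 'v \<times> 'e list \<times> nat \<Rightarrow> 'v \<times> 'e list \<times> nat" where
  "ext e x = (case x of (i, p, c) \<Rightarrow> (i, p @ [e], c))"

lemma ext_inj: "ext e x = ext e y \<Longrightarrow> x = y"
  unfolding ext_def by (cases x, cases y) auto

lemma ext_simp[simp]: "ext e (i, p, c) = (i, p @ [e], c)" unfolding ext_def by simp

definition Mm :: "'e \<Rightarrow> 'a mat" where
  "Mm e = mat01 (nn (t e)) (nn (s e)) (\<lambda>r c. bs (t e) ! r = ext e (bs (s e) ! c))"

lemma Mm_carrier: "Mm e \<in> carrier_mat (nn (t e)) (nn (s e))" unfolding Mm_def by simp

definition pmt :: "nat \<Rightarrow> 'e list \<Rightarrow> 'a mat" where
  "pmt n p = foldl (\<lambda>A e. m e * A) (1\<^sub>m n) p"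

lemma pmt_Nil: "pmt n [] = 1\<^sub>m n" unfolding pmt_def by simp
lemma pmt_snoc: "pmt n (p @ [e]) = m e * pmt n p" unfolding pmt_def by simp

lemma mc: "e \<in> E \<Longrightarrow> m e \<in> carrier_mat (d (t e)) (d (s e))"
  using r unfolding is_rep_def by blast

lemma npath_snoc:
  "npath i (p @ [e]) j \<longleftrightarrow> e \<in> E \<and> t e = j \<and> npath i p (s e) \<and> (p \<noteq> [] \<longrightarrow> (e, last p) \<notin> I)"
proof (cases "p = []")
  case True thus ?thesis unfolding npath_def by (auto simp: np_single np_Nil)
next
  case False thus ?thesis unfolding npath_def by (auto simp: np_append1)
qed

lemma npath_Nil: "npath i [] j \<longleftrightarrow> i = j" unfolding npath_def by (simp add: np_Nil)

lemma pmt_carrier: "npath i p j \<Longrightarrow> pmt (d i) p \<in> carrier_mat (d j) (d i)"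
proof (induction p arbitrary: j rule: rev_induct)
  case Nil thus ?case by (simp add: npath_Nil pmt_Nil)
next
  case (snoc e p)
  have h: "e \<in> E" "t e = j" "npath i p (s e)" using snoc.prems npath_snoc by auto
  thus ?case using snoc.IH[OF h(3)] mc[OF h(1)] by (simp add: pmt_snoc)
qed

definition gm :: "'v \<Rightarrow> 'a mat" where
  "gm j = mat (d j) (nn j) (\<lambda>(r, c). case bs j ! c of (i, p, cc) \<Rightarrow> pmt (d i) p $$ (r, cc))"

lemma gm_carrier: "gm j \<in> carrier_mat (d j) (nn j)" unfolding gm_def by simp

lemma B_D: "(i, p, c) \<in> B j \<Longrightarrow> i \<in> V \<and> npath i p j \<and> c < d i" unfolding B_def by simp

lemma gm_col:
  assumes c: "c < nn j" and b: "bs j ! c = (i, p, cc)"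
  shows "col (gm j) c = col (pmt (d i) p) cc"
proof -
  have "(i, p, cc) \<in> B j" using bs_in[OF c] b by simp
  note h = B_D[OF this]
  have pc: "pmt (d i) p \<in> carrier_mat (d j) (d i)" using pmt_carrier h by blast
  show ?thesis
  proof (rule eq_vecI)
    fix k assume "k < dim_vec (col (pmt (d i) p) cc)"
    hence k: "k < d j" using pc by simp
    show "col (gm j) c $ k = col (pmt (d i) p) cc $ k"
      using k c b h pc unfolding gm_def by (simp add: col_mat)
  qed (use pc c in \<open>simp add: gm_def\<close>)
qed

end

context pcov begin

lemma Mm_col:
  assumes c: "c < nn (s e)"
  shows "col (Mm e) c = (if ext e (bs (s e) ! c) \<in> B (t e)
      then unit_vec (nn (t e)) (idx (bs (t e)) (ext e (bs (s e) ! c))) else 0\<^sub>v (nn (t e)))"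
  using col_fun[OF conjunct1[OF bs[of "t e"]] c, of "\<lambda>c. ext e (bs (s e) ! c)", where 'a='a]
    bs[of "t e"] unfolding Mm_def nn_def by simp

lemma Mm_rel:
  assumes rel: "(b, a) \<in> I"
  shows "Mm b * Mm a = 0\<^sub>m (nn (t b)) (nn (s a))"
proof -
  have ab: "a \<in> E" "b \<in> E" "t a = s b" using gentle_I[OF g rel] by auto
  show ?thesis
  proof (rule mat_col_eqI)
    fix c assume "c < dim_col (0\<^sub>m (nn (t b)) (nn (s a)) :: 'a mat)"
    hence c: "c < nn (s a)" by simp
    obtain i p cc where bc: "bs (s a) ! c = (i, p, cc)" by (cases "bs (s a) ! c") auto
    have "col (Mm b * Mm a) c = Mm b *\<^sub>v col (Mm a) c"
      using col_mult2[OF Mm_carrier[of b] _ c, of "Mm a"] Mm_carrier[of a] ab by simp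
    also have "\<dots> = 0\<^sub>v (nn (t b))"
    proof (cases "ext a (bs (s a) ! c) \<in> B (t a)")
      case True
      let ?r = "idx (bs (t a)) (ext a (bs (s a) ! c))"
      have r: "?r < nn (t a)" and br: "bs (t a) ! ?r = ext a (bs (s a) ! c)"
        using idx_props[of "bs (t a)"] bs[of "t a"] True unfolding nn_def by auto
      have "Mm b *\<^sub>v col (Mm a) c = Mm b *\<^sub>v unit_vec (nn (s b)) ?r"
        using Mm_col[OF c] True ab by simp
      also have "\<dots> = col (Mm b) ?r" using mat_unit_col[OF Mm_carrier[of b]] r ab by simp
      also have "\<dots> = 0\<^sub>v (nn (t b))"
      proof -
        have "ext b (bs (s b) ! ?r) \<notin> B (t b)"
        proof
          assume "ext b (bs (s b) ! ?r) \<in> B (t b)"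
          hence "(i, (p @ [a]) @ [b], cc) \<in> B (t b)" using br bc ab by simp
          hence "npath i ((p @ [a]) @ [b]) (t b)" using B_D by blast
          hence "(b, last (p @ [a])) \<notin> I" using npath_snoc[of i "p @ [a]" b "t b"] by blast
          thus False using rel by simp
        qed
        moreover have "?r < nn (s b)" using r ab by simp
        ultimately show ?thesis using Mm_col[of ?r b] by simp
      qed
      finally show ?thesis .
    next
      case False
      hence "col (Mm a) c = 0\<^sub>v (nn (s b))" using Mm_col[OF c] ab by simp
      thus ?thesis using mat_vec_zero[OF Mm_carrier[of b]] by simp
    qed
    finally show "col (Mm b * Mm a) c = col (0\<^sub>m (nn (t b)) (nn (s a))) c" using c by simp
  qed (use Mm_carrier in auto)
qed

lemma gm_hom:
  assumes e: "e \<in> E"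
  shows "gm (t e) * Mm e = m e * gm (s e)"
proof (rule mat_col_eqI)
  fix c assume "c < dim_col (m e * gm (s e))"
  moreover have "dim_col (m e * gm (s e)) = nn (s e)" using gm_carrier[of "s e"] by simp
  ultimately have c: "c < nn (s e)" by simp
  obtain i p cc where bc: "bs (s e) ! c = (i, p, cc)" by (cases "bs (s e) ! c") auto
  have h: "i \<in> V" "npath i p (s e)" "cc < d i" using B_D bs_in[OF c] bc by auto
  have pc: "pmt (d i) p \<in> carrier_mat (d (s e)) (d i)" using pmt_carrier[OF h(2)] .
  have "col (m e * gm (s e)) c = m e *\<^sub>v col (gm (s e)) c"
    using col_mult2[OF mc[OF e] gm_carrier c] .
  also have "\<dots> = m e *\<^sub>v col (pmt (d i) p) cc" using gm_col[OF c bc] by simp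
  also have "\<dots> = col (pmt (d i) (p @ [e])) cc"
    using col_mult2[OF mc[OF e] pc h(3)] pmt_snoc by simp
  finally have R: "col (m e * gm (s e)) c = col (pmt (d i) (p @ [e])) cc" .
  have L: "col (gm (t e) * Mm e) c = gm (t e) *\<^sub>v col (Mm e) c"
    using col_mult2[OF gm_carrier Mm_carrier c] .
  show "col (gm (t e) * Mm e) c = col (m e * gm (s e)) c"
  proof (cases "ext e (bs (s e) ! c) \<in> B (t e)")
    case True
    let ?r = "idx (bs (t e)) (ext e (bs (s e) ! c))"
    have r: "?r < nn (t e)" and br: "bs (t e) ! ?r = (i, p @ [e], cc)"
      using idx_props[of "bs (t e)"] bs[of "t e"] True bc unfolding nn_def by auto
    have "gm (t e) *\<^sub>v col (Mm e) c = gm (t e) *\<^sub>v unit_vec (nn (t e)) ?r"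
      using Mm_col[OF c] True by simp
    also have "\<dots> = col (gm (t e)) ?r" using mat_unit_col[OF gm_carrier r] .
    also have "\<dots> = col (pmt (d i) (p @ [e])) cc" using gm_col[OF r br] .
    finally show ?thesis using L R by simp
  next
    case False
    have "\<not> npath i (p @ [e]) (t e)" using False bc h unfolding B_def by auto
    hence pne: "p \<noteq> []" and li: "(e, last p) \<in> I" using npath_snoc h e by auto
    define q where "q = butlast p"
    define l where "l = last p"
    have pq: "p = q @ [l]" using pne unfolding q_def l_def by simp
    have hq: "l \<in> E" "t l = s e" "npath i q (s l)" using h(2) npath_snoc pq by auto
    have z: "m e * m l = 0\<^sub>m (d (t e)) (d (s l))"
      using r li unfolding is_rep_def l_def by fastforce
    have qc: "pmt (d i) q \<in> carrier_mat (d (s l)) (d i)" using pmt_carrier[OF hq(3)] .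
    have "pmt (d i) (p @ [e]) = m e * (m l * pmt (d i) q)"
      using pq pmt_snoc[of "d i" "q @ [l]" e] pmt_snoc[of "d i" q l] by simp
    also have "\<dots> = (m e * m l) * pmt (d i) q"
      using mc[OF e] mc[OF hq(1)] qc hq(2) by (simp add: assoc_mult_mat)
    also have "\<dots> = 0\<^sub>m (d (t e)) (d i)" using z qc by simp
    finally have "col (pmt (d i) (p @ [e])) cc = 0\<^sub>v (d (t e))" using h(3) by simp
    moreover have "gm (t e) *\<^sub>v col (Mm e) c = 0\<^sub>v (d (t e))"
      using Mm_col[OF c] False mat_vec_zero[OF gm_carrier] by simp
    ultimately show ?thesis using L R by simp
  qed
qed (use gm_carrier[of "t e"] gm_carrier[of "s e"] Mm_carrier[of e] mc[OF e] in auto)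

end

context pcov begin

lemma gm_surj:
  assumes j: "j \<in> V"
  shows "mat_surj (gm j)"
proof -
  define S :: "'a mat" where "S = mat01 (nn j) (d j) (\<lambda>r c. bs j ! r = (\<lambda>c. (j, [], c)) c)"
  have Sc: "S \<in> carrier_mat (nn j) (d j)" unfolding S_def by simp
  have "gm j * S = 1\<^sub>m (d j)"
  proof (rule mat_col_eqI)
    fix c assume "c < dim_col (1\<^sub>m (d j) :: 'a mat)"
    hence c: "c < d j" by simp
    have inB: "(j, [], c) \<in> B j" unfolding B_def using j c by (simp add: npath_Nil)
    let ?r = "idx (bs j) (j, [], c)"
    have r: "?r < nn j" and br: "bs j ! ?r = (j, [], c)"
      using idx_props[of "bs j"] bs[of j] inB unfolding nn_def by auto
    have "col S c = unit_vec (nn j) ?r"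
      using col_fun[OF conjunct1[OF bs[of j]] c, of "\<lambda>c. (j, [], c)", where 'a='a] bs[of j] inB
      unfolding S_def nn_def by simp
    hence "col (gm j * S) c = gm j *\<^sub>v unit_vec (nn j) ?r"
      using col_mult2[OF gm_carrier Sc c] by simp
    also have "\<dots> = col (gm j) ?r" using mat_unit_col[OF gm_carrier r] .
    also have "\<dots> = col (pmt (d j) []) c" using gm_col[OF r br] .
    also have "\<dots> = col (1\<^sub>m (d j)) c" by (simp add: pmt_Nil)
    finally show "col (gm j * S) c = col (1\<^sub>m (d j)) c" .
  qed (use gm_carrier[of j] Sc in auto)
  show ?thesis unfolding mat_surj_def
  proof
    fix y :: "'a vec" assume "y \<in> carrier_vec (dim_row (gm j))"
    hence y: "y \<in> carrier_vec (d j)" using gm_carrier[of j] by simp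
    have "gm j *\<^sub>v (S *\<^sub>v y) = (gm j * S) *\<^sub>v y" using assoc_mult_mat_vec[OF gm_carrier Sc y] by simp
    also have "\<dots> = y" using \<open>gm j * S = 1\<^sub>m (d j)\<close> y by simp
    finally show "\<exists>x\<in>carrier_vec (dim_col (gm j)). gm j *\<^sub>v x = y"
      using Sc gm_carrier[of j] mult_mat_vec_carrier[OF Sc y] by (intro bexI[of _ "S *\<^sub>v y"]) auto
  qed
qed

lemma Mm_exact:
  assumes a: "\<alpha> \<in> E" and rel: "(\<alpha>, \<gamma>) \<in> I"
    and x: "x \<in> carrier_vec (nn (s \<alpha>))" and x0: "Mm \<alpha> *\<^sub>v x = 0\<^sub>v (nn (t \<alpha>))"
  shows "\<exists>y\<in>carrier_vec (nn (s \<gamma>)). Mm \<gamma> *\<^sub>v y = x"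
proof -
  have tg: "t \<gamma> = s \<alpha>" and gE: "\<gamma> \<in> E" using gentle_I[OF g rel] by auto
  have xz: "x $ c = 0" if c: "c < nn (s \<alpha>)" and v: "ext \<alpha> (bs (s \<alpha>) ! c) \<in> B (t \<alpha>)" for c
  proof -
    let ?r = "idx (bs (t \<alpha>)) (ext \<alpha> (bs (s \<alpha>) ! c))"
    have r: "?r < nn (t \<alpha>)" and br: "bs (t \<alpha>) ! ?r = ext \<alpha> (bs (s \<alpha>) ! c)"
      using idx_props[of "bs (t \<alpha>)"] bs[of "t \<alpha>"] v unfolding nn_def by auto
    have "(Mm \<alpha> *\<^sub>v x) $ ?r = x $ c"
      unfolding Mm_def nn_def
      by (rule vec_fun1[where xs="bs (s \<alpha>)" and f="ext \<alpha>"])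
        (use bs[of "s \<alpha>"] ext_inj r br c x in \<open>auto simp: nn_def\<close>)
    thus ?thesis using x0 r by simp
  qed
  define y where "y = vec (nn (s \<gamma>)) (\<lambda>r. if ext \<gamma> (bs (s \<gamma>) ! r) \<in> B (s \<alpha>)
      then x $ idx (bs (s \<alpha>)) (ext \<gamma> (bs (s \<gamma>) ! r)) else 0)"
  have y: "y \<in> carrier_vec (nn (s \<gamma>))" unfolding y_def by simp
  have "Mm \<gamma> *\<^sub>v y = x"
  proof (rule eq_vecI)
    fix c assume "c < dim_vec x"
    hence c: "c < nn (s \<alpha>)" using x by simp
    show "(Mm \<gamma> *\<^sub>v y) $ c = x $ c"
    proof (cases "\<exists>r<nn (s \<gamma>). bs (t \<gamma>) ! c = ext \<gamma> (bs (s \<gamma>) ! r)")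
      case True
      then obtain r where r: "r < nn (s \<gamma>)" and br: "bs (t \<gamma>) ! c = ext \<gamma> (bs (s \<gamma>) ! r)" by blast
      have "(Mm \<gamma> *\<^sub>v y) $ c = y $ r"
        unfolding Mm_def nn_def
        by (rule vec_fun1[where xs="bs (s \<gamma>)" and f="ext \<gamma>"])
          (use bs[of "s \<gamma>"] ext_inj r br c y tg in \<open>auto simp: nn_def\<close>)
      also have "\<dots> = x $ idx (bs (s \<alpha>)) (ext \<gamma> (bs (s \<gamma>) ! r))"
      proof -
        have "ext \<gamma> (bs (s \<gamma>) ! r) \<in> B (s \<alpha>)" using br bs_in[of c "t \<gamma>"] c tg by simp
        thus ?thesis unfolding y_def using r by simp
      qed
      also have "\<dots> = x $ c" using br tg idx_nth[of "bs (s \<alpha>)" c] bs c unfolding nn_def by simp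
      finally show ?thesis .
    next
      case False
      have "(Mm \<gamma> *\<^sub>v y) $ c = 0"
        unfolding Mm_def nn_def
        by (rule vec_fun0) (use False c y tg in \<open>auto simp: nn_def\<close>)
      moreover have "x $ c = 0"
      proof (cases "ext \<alpha> (bs (s \<alpha>) ! c) \<in> B (t \<alpha>)")
        case True thus ?thesis using xz c by blast
      next
        case NV: False
        obtain i p cc where bc: "bs (s \<alpha>) ! c = (i, p, cc)" by (cases "bs (s \<alpha>) ! c") auto
        have h: "i \<in> V" "npath i p (s \<alpha>)" "cc < d i" using B_D bs_in[OF c] bc by auto
        have "\<not> npath i (p @ [\<alpha>]) (t \<alpha>)" using NV bc h unfolding B_def by auto
        hence pne: "p \<noteq> []" and li: "(\<alpha>, last p) \<in> I" using npath_snoc h a by auto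
        have lg: "last p = \<gamma>" using gentle_pred_uniq[OF g li rel] .
        define q where "q = butlast p"
        have pq: "p = q @ [\<gamma>]" using pne lg unfolding q_def by (metis append_butlast_last_id)
        have hq: "npath i q (s \<gamma>)" using h(2) npath_snoc pq by auto
        hence "(i, q, cc) \<in> B (s \<gamma>)" unfolding B_def using h by simp
        then obtain r where r: "r < nn (s \<gamma>)" and br: "bs (s \<gamma>) ! r = (i, q, cc)"
          using bs[of "s \<gamma>"] unfolding nn_def by (metis in_set_conv_nth)
        have "bs (t \<gamma>) ! c = ext \<gamma> (bs (s \<gamma>) ! r)" using br bc pq tg by simp
        thus ?thesis using False r by blast
      qed
      ultimately show ?thesis by simp
    qed
  qed (use x y Mm_carrier[of \<gamma>] tg in auto)
  thus ?thesis using y by blast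
qed

end

lemma proj_exact:
  fixes m :: "'e \<Rightarrow> 'a::field mat" and V :: "'v set" and E :: "'e set"
  assumes g: "gentle V E s t I" and pr: "projective_rep V E s t I d m"
    and a: "\<alpha> \<in> E" and rel: "(\<alpha>, \<gamma>) \<in> I"
    and x: "x \<in> carrier_vec (d (s \<alpha>))" and x0: "m \<alpha> *\<^sub>v x = 0\<^sub>v (d (t \<alpha>))"
  shows "\<exists>y\<in>carrier_vec (d (s \<gamma>)). m \<gamma> *\<^sub>v y = x"
proof -
  have rP: "is_rep V E s t I d m" using pr unfolding projective_rep_def by blast
  interpret pcov V E s t I d m by unfold_locales (rule g, rule rP)
  have tg: "t \<gamma> = s \<alpha>" and gE: "\<gamma> \<in> E" using gentle_I[OF g rel] by auto
  have sa: "s \<alpha> \<in> V" "t \<alpha> \<in> V" using gentle_st[OF g a] by auto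
  have sg: "s \<gamma> \<in> V" using gentle_st[OF g gE] by auto
  have repC: "is_rep V E s t I nn Mm"
    unfolding is_rep_def using Mm_carrier Mm_rel by auto
  have homC: "is_hom V E s t nn Mm d m gm"
    unfolding is_hom_def using gm_carrier gm_hom by auto
  have surjC: "\<forall>i\<in>V. mat_surj (gm i)" using gm_surj by auto
  have homI: "is_hom V E s t d m d m (\<lambda>i. 1\<^sub>m (d i))"
    unfolding is_hom_def
  proof (intro conjI ballI)
    fix e assume "e \<in> E"
    thus "1\<^sub>m (d (t e)) * m e = m e * 1\<^sub>m (d (s e))" using mc[of e] by simp
  qed simp
  have "\<forall>(dM :: 'v \<Rightarrow> nat) (mM :: 'e \<Rightarrow> 'a mat) dN mN g h.
        is_rep V E s t I dM mM \<longrightarrow> is_rep V E s t I dN mN \<longrightarrow>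
        is_hom V E s t dM mM dN mN g \<longrightarrow> (\<forall>i\<in>V. mat_surj (g i)) \<longrightarrow>
        is_hom V E s t d m dN mN h \<longrightarrow>
        (\<exists>k. is_hom V E s t d m dM mM k \<and> (\<forall>i\<in>V. g i * k i = h i))"
    using pr unfolding projective_rep_def by blast
  hence "\<exists>k. is_hom V E s t d m nn Mm k \<and> (\<forall>i\<in>V. gm i * k i = 1\<^sub>m (d i))"
    using repC rP homC surjC homI by blast
  then obtain k where hk: "is_hom V E s t d m nn Mm k" and gk: "\<forall>i\<in>V. gm i * k i = 1\<^sub>m (d i)"
    by blast
  have kc: "k i \<in> carrier_mat (nn i) (d i)" if "i \<in> V" for i using hk that unfolding is_hom_def by blast
  have km: "k (t \<alpha>) * m \<alpha> = Mm \<alpha> * k (s \<alpha>)" using hk a unfolding is_hom_def by blast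
  define x' where "x' = k (s \<alpha>) *\<^sub>v x"
  have x'c: "x' \<in> carrier_vec (nn (s \<alpha>))" unfolding x'_def using kc[OF sa(1)] x by auto
  have "Mm \<alpha> *\<^sub>v x' = (Mm \<alpha> * k (s \<alpha>)) *\<^sub>v x"
    unfolding x'_def using assoc_mult_mat_vec[OF Mm_carrier kc[OF sa(1)] x] by simp
  also have "\<dots> = (k (t \<alpha>) * m \<alpha>) *\<^sub>v x" using km by simp
  also have "\<dots> = k (t \<alpha>) *\<^sub>v (m \<alpha> *\<^sub>v x)" using assoc_mult_mat_vec[OF kc[OF sa(2)] mc[OF a] x] .
  also have "\<dots> = 0\<^sub>v (nn (t \<alpha>))" using x0 mat_vec_zero[OF kc[OF sa(2)]] by simp
  finally have "Mm \<alpha> *\<^sub>v x' = 0\<^sub>v (nn (t \<alpha>))" .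
  then obtain y' where y': "y' \<in> carrier_vec (nn (s \<gamma>))" and my: "Mm \<gamma> *\<^sub>v y' = x'"
    using Mm_exact[OF a rel x'c] by blast
  have "x = (gm (s \<alpha>) * k (s \<alpha>)) *\<^sub>v x" using gk sa(1) x by simp
  also have "\<dots> = gm (s \<alpha>) *\<^sub>v x'" unfolding x'_def using assoc_mult_mat_vec[OF gm_carrier kc[OF sa(1)] x] .
  also have "\<dots> = gm (t \<gamma>) *\<^sub>v (Mm \<gamma> *\<^sub>v y')" using my tg by simp
  also have "\<dots> = (gm (t \<gamma>) * Mm \<gamma>) *\<^sub>v y'" using assoc_mult_mat_vec[OF gm_carrier Mm_carrier y'] by simp
  also have "\<dots> = (m \<gamma> * gm (s \<gamma>)) *\<^sub>v y'" using gm_hom[OF gE] by simp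
  also have "\<dots> = m \<gamma> *\<^sub>v (gm (s \<gamma>) *\<^sub>v y')" using assoc_mult_mat_vec[OF mc[OF gE] gm_carrier y'] .
  finally have "m \<gamma> *\<^sub>v (gm (s \<gamma>) *\<^sub>v y') = x" by simp
  moreover have "gm (s \<gamma>) *\<^sub>v y' \<in> carrier_vec (d (s \<gamma>))" using mult_mat_vec_carrier[OF gm_carrier y'] .
  ultimately show ?thesis by blast
qed

lemma col_inv1:
  assumes "distinct ys" "\<And>a b. f a = f b \<Longrightarrow> a = b" "r < length ys" "c < nc" "X c = f (ys ! r)"
  shows "col (mat01 (length ys) nc (\<lambda>r c. X c = f (ys ! r)) :: 'a::field mat) c = unit_vec (length ys) r"
proof (rule mat01_col1)
  fix r' assume "r' < length ys" "X c = f (ys ! r')"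
  hence "ys ! r' = ys ! r" using assms(2,5) by metis
  thus "r' = r" using nth_eq_iff_index_eq[OF assms(1)] assms(3) \<open>r' < length ys\<close> by blast
qed (use assms in auto)

lemma col_inv0:
  assumes "c < nc" "\<And>r. r < length ys \<Longrightarrow> X c \<noteq> f (ys ! r)"
  shows "col (mat01 (length ys) nc (\<lambda>r c. X c = f (ys ! r)) :: 'a::field mat) c = 0\<^sub>v (length ys)"
  by (rule mat01_col0) (use assms in auto)

lemma vec_inv1:
  assumes "distinct xs" "r < nr" "c < length xs" "xs ! c = Y r" "v \<in> carrier_vec (length xs)"
  shows "(((mat01 nr (length xs) (\<lambda>r c. xs ! c = Y r)) :: 'a::field mat) *\<^sub>v v) $ r = v $ c"
proof (rule mat01_vec1)
  fix c' assume "c' < length xs" "xs ! c' = Y r"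
  thus "c' = c" using nth_eq_iff_index_eq[OF assms(1)] assms(3,4) by metis
qed (use assms in auto)

context pcov begin

lemma npath_Cons:
  "npath j (e # p) i \<longleftrightarrow> e \<in> E \<and> s e = j \<and> npath (t e) p i \<and> (p \<noteq> [] \<longrightarrow> (hd p, e) \<notin> I)"
proof (cases "p = []")
  case True thus ?thesis unfolding npath_def by (auto simp: np_single np_Nil)
next
  case False thus ?thesis unfolding npath_def by (auto simp: np_Cons1)
qed

lemma pmt_Cons:
  assumes "npath (t e) p i" "e \<in> E"
  shows "pmt (d (s e)) (e # p) = pmt (d (t e)) p * m e"
  using assms(1)
proof (induction p arbitrary: i rule: rev_induct)
  case Nil
  have "pmt (d (s e)) [e] = m e * 1\<^sub>m (d (s e))" unfolding pmt_def by simp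
  thus ?case using mc[OF assms(2)] by (simp add: pmt_Nil)
next
  case (snoc f p)
  have h: "f \<in> E" "npath (t e) p (s f)" using snoc.prems npath_snoc by auto
  have pc: "pmt (d (t e)) p \<in> carrier_mat (d (s f)) (d (t e))" using pmt_carrier[OF h(2)] .
  have "pmt (d (s e)) (e # p @ [f]) = m f * pmt (d (s e)) (e # p)"
    using pmt_snoc[of "d (s e)" "e # p" f] by simp
  also have "\<dots> = m f * (pmt (d (t e)) p * m e)" using snoc.IH[OF h(2)] by simp
  also have "\<dots> = (m f * pmt (d (t e)) p) * m e"
    using mc[OF h(1)] pc mc[OF assms(2)] by (simp add: assoc_mult_mat)
  also have "\<dots> = pmt (d (t e)) (p @ [f]) * m e" by (simp add: pmt_snoc)
  finally show ?case .
qed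

definition B' :: "'v \<Rightarrow> ('v \<times> 'e list \<times> nat) set" where
  "B' j = {(i, p, c). i \<in> V \<and> npath j p i \<and> c < d i}"

lemma B'_fin: "finite (B' j)"
proof -
  obtain N where N: "\<forall>xs. nonzero_path E s t I xs \<longrightarrow> length xs \<le> N" using gentleD(6)[OF g] by blast
  have "B' j \<subseteq> Sigma V (\<lambda>i. {p. set p \<subseteq> E \<and> length p \<le> N} \<times> {..<d i})"
    unfolding B'_def npath_def nonzero_path_def using N unfolding nonzero_path_def by auto
  moreover have "finite (Sigma V (\<lambda>i. {p. set p \<subseteq> E \<and> length p \<le> N} \<times> {..<d i}))"
    using gentleD(1,2)[OF g] finite_lists_length_le by (intro finite_SigmaI finite_cartesian_product) auto
  ultimately show ?thesis by (rule finite_subset)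
qed

definition bs' :: "'v \<Rightarrow> ('v \<times> 'e list \<times> nat) list" where
  "bs' j = (SOME xs. distinct xs \<and> set xs = B' j)"

lemma bs': "distinct (bs' j) \<and> set (bs' j) = B' j"
proof -
  have "\<exists>xs. distinct xs \<and> set xs = B' j" using finite_distinct_list[OF B'_fin] by metis
  thus ?thesis unfolding bs'_def by (rule someI_ex)
qed

definition nn' :: "'v \<Rightarrow> nat" where "nn' j = length (bs' j)"

lemma bs'_in: "c < nn' j \<Longrightarrow> bs' j ! c \<in> B' j"
  using bs'[of j] nth_mem unfolding nn'_def by metis

lemma B'_D: "(i, p, c) \<in> B' j \<Longrightarrow> i \<in> V \<and> npath j p i \<and> c < d i" unfolding B'_def by simp

definition cns :: "'e \<Rightarrow> 'v \<times> 'e list \<times> nat \<Rightarrow> 'v \<times> 'e list \<times> nat" where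
  "cns e x = (case x of (i, p, c) \<Rightarrow> (i, e # p, c))"

lemma cns_inj: "cns e x = cns e y \<Longrightarrow> x = y"
  unfolding cns_def by (cases x, cases y) auto

lemma cns_simp[simp]: "cns e (i, p, c) = (i, e # p, c)" unfolding cns_def by simp

definition Mi :: "'e \<Rightarrow> 'a mat" where
  "Mi e = mat01 (nn' (t e)) (nn' (s e)) (\<lambda>r c. bs' (s e) ! c = cns e (bs' (t e) ! r))"

lemma Mi_carrier: "Mi e \<in> carrier_mat (nn' (t e)) (nn' (s e))" unfolding Mi_def by simp

definition hi :: "'v \<Rightarrow> 'a mat" where
  "hi j = mat (nn' j) (d j) (\<lambda>(r, c). case bs' j ! r of (i, p, cc) \<Rightarrow> pmt (d j) p $$ (cc, c))"

lemma hi_carrier: "hi j \<in> carrier_mat (nn' j) (d j)" unfolding hi_def by simp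

lemma hi_vec:
  assumes r: "r < nn' j" and b: "bs' j ! r = (i, p, cc)" and x: "x \<in> carrier_vec (d j)"
  shows "(hi j *\<^sub>v x) $ r = (pmt (d j) p *\<^sub>v x) $ cc"
proof -
  have h: "i \<in> V" "npath j p i" "cc < d i" using B'_D bs'_in[OF r] b by auto
  have pc: "pmt (d j) p \<in> carrier_mat (d i) (d j)" using pmt_carrier[OF h(2)] .
  have "row (hi j) r = row (pmt (d j) p) cc"
  proof (rule eq_vecI)
    fix k assume "k < dim_vec (row (pmt (d j) p) cc)"
    hence k: "k < d j" using pc by simp
    show "row (hi j) r $ k = row (pmt (d j) p) cc $ k"
      using k r b h pc unfolding hi_def by (simp add: row_mat)
  qed (use pc r in \<open>simp add: hi_def\<close>)
  thus ?thesis using r h pc hi_carrier[of j] by (simp add: index_mult_mat_vec)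
qed

end

context pcov begin

lemma rel0: "(b, a) \<in> I \<Longrightarrow> m b * m a = 0\<^sub>m (d (t b)) (d (s a))"
  using r unfolding is_rep_def by fastforce

lemma Mi_col1:
  assumes c: "c < nn' (s e)" and r: "r < nn' (t e)" and eq: "bs' (s e) ! c = cns e (bs' (t e) ! r)"
  shows "col (Mi e) c = unit_vec (nn' (t e)) r"
  unfolding Mi_def nn'_def
  by (rule col_inv1[where f="cns e"]) (use bs'[of "t e"] cns_inj c r eq in \<open>auto simp: nn'_def\<close>)

lemma Mi_col0:
  assumes c: "c < nn' (s e)" and ne: "\<And>r. r < nn' (t e) \<Longrightarrow> bs' (s e) ! c \<noteq> cns e (bs' (t e) ! r)"
  shows "col (Mi e) c = 0\<^sub>v (nn' (t e))"
  unfolding Mi_def nn'_def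
  by (rule col_inv0) (use c ne in \<open>auto simp: nn'_def\<close>)

lemma Mi_vec1:
  assumes r: "r < nn' (t e)" and c: "c < nn' (s e)" and eq: "bs' (s e) ! c = cns e (bs' (t e) ! r)"
    and v: "v \<in> carrier_vec (nn' (s e))"
  shows "(Mi e *\<^sub>v v) $ r = v $ c"
  unfolding Mi_def nn'_def
  by (rule vec_inv1) (use bs'[of "s e"] r c eq v in \<open>auto simp: nn'_def\<close>)

lemma Mi_vec0:
  assumes r: "r < nn' (t e)" and ne: "cns e (bs' (t e) ! r) \<notin> B' (s e)"
    and v: "v \<in> carrier_vec (nn' (s e))"
  shows "(Mi e *\<^sub>v v) $ r = 0"
  unfolding Mi_def
proof (rule mat01_vec0)
  fix c assume c: "c < nn' (s e)"
  show "bs' (s e) ! c \<noteq> cns e (bs' (t e) ! r)" using bs'_in[OF c] ne by metis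
qed (use r v in auto)

lemma Mi_rel:
  assumes rel: "(b, a) \<in> I"
  shows "Mi b * Mi a = 0\<^sub>m (nn' (t b)) (nn' (s a))"
proof -
  have ab: "a \<in> E" "b \<in> E" "t a = s b" using gentle_I[OF g rel] by auto
  show ?thesis
  proof (rule mat_col_eqI)
    fix c assume "c < dim_col (0\<^sub>m (nn' (t b)) (nn' (s a)) :: 'a mat)"
    hence c: "c < nn' (s a)" by simp
    have "col (Mi b * Mi a) c = Mi b *\<^sub>v col (Mi a) c"
      using col_mult2[OF Mi_carrier[of b] _ c, of "Mi a"] Mi_carrier[of a] ab by simp
    also have "\<dots> = 0\<^sub>v (nn' (t b))"
    proof (cases "\<exists>r<nn' (t a). bs' (s a) ! c = cns a (bs' (t a) ! r)")
      case True
      then obtain r where r: "r < nn' (t a)" and eq: "bs' (s a) ! c = cns a (bs' (t a) ! r)" by blast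
      have "Mi b *\<^sub>v col (Mi a) c = Mi b *\<^sub>v unit_vec (nn' (s b)) r"
        using Mi_col1[OF c r eq] ab by simp
      also have "\<dots> = col (Mi b) r" using mat_unit_col[OF Mi_carrier[of b]] r ab by simp
      also have "\<dots> = 0\<^sub>v (nn' (t b))"
      proof (rule Mi_col0)
        show "r < nn' (s b)" using r ab by simp
        fix r' assume "r' < nn' (t b)"
        show "bs' (s b) ! r \<noteq> cns b (bs' (t b) ! r')"
        proof
          assume h: "bs' (s b) ! r = cns b (bs' (t b) ! r')"
          obtain i q cc where bq: "bs' (t b) ! r' = (i, q, cc)" by (cases "bs' (t b) ! r'") auto
          have "bs' (s a) ! c = (i, a # b # q, cc)" using eq h bq ab by simp
          hence "npath (s a) (a # b # q) i" using B'_D bs'_in[OF c] by metis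
          hence "(b, a) \<notin> I" using npath_Cons[of "s a" a "b # q" i] by simp
          thus False using rel by simp
        qed
      qed
      finally show ?thesis .
    next
      case False
      hence "col (Mi a) c = 0\<^sub>v (nn' (s b))" using Mi_col0[OF c] ab by auto
      thus ?thesis using mat_vec_zero[OF Mi_carrier[of b]] by simp
    qed
    finally show "col (Mi b * Mi a) c = col (0\<^sub>m (nn' (t b)) (nn' (s a))) c" using c by simp
  qed (use Mi_carrier in auto)
qed

lemma hi_hom:
  assumes e: "e \<in> E"
  shows "hi (t e) * m e = Mi e * hi (s e)"
proof (rule mat_eq_by_vec)
  show "hi (t e) * m e \<in> carrier_mat (nn' (t e)) (d (s e))" using mult_carrier_mat[OF hi_carrier mc[OF e]] .
  show "Mi e * hi (s e) \<in> carrier_mat (nn' (t e)) (d (s e))" using mult_carrier_mat[OF Mi_carrier hi_carrier] .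
  fix v :: "'a vec" assume v: "v \<in> carrier_vec (d (s e))"
  have mv: "m e *\<^sub>v v \<in> carrier_vec (d (t e))" using mult_mat_vec_carrier[OF mc[OF e] v] .
  have hv: "hi (s e) *\<^sub>v v \<in> carrier_vec (nn' (s e))" using mult_mat_vec_carrier[OF hi_carrier v] .
  have L: "(hi (t e) * m e) *\<^sub>v v = hi (t e) *\<^sub>v (m e *\<^sub>v v)"
    using assoc_mult_mat_vec[OF hi_carrier mc[OF e] v] .
  have R: "(Mi e * hi (s e)) *\<^sub>v v = Mi e *\<^sub>v (hi (s e) *\<^sub>v v)"
    using assoc_mult_mat_vec[OF Mi_carrier hi_carrier v] .
  show "(hi (t e) * m e) *\<^sub>v v = (Mi e * hi (s e)) *\<^sub>v v"
  proof (rule eq_vecI)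
    fix r assume "r < dim_vec ((Mi e * hi (s e)) *\<^sub>v v)"
    hence r: "r < nn' (t e)" using Mi_carrier[of e] by simp
    obtain i p cc where bp: "bs' (t e) ! r = (i, p, cc)" by (cases "bs' (t e) ! r") auto
    have h: "i \<in> V" "npath (t e) p i" "cc < d i" using B'_D bs'_in[OF r] bp by auto
    have pc: "pmt (d (t e)) p \<in> carrier_mat (d i) (d (t e))" using pmt_carrier[OF h(2)] .
    have "(hi (t e) *\<^sub>v (m e *\<^sub>v v)) $ r = (pmt (d (t e)) p *\<^sub>v (m e *\<^sub>v v)) $ cc"
      using hi_vec[OF r bp mv] .
    also have "\<dots> = ((pmt (d (t e)) p * m e) *\<^sub>v v) $ cc"
      using assoc_mult_mat_vec[OF pc mc[OF e] v] by simp
    finally have Lr: "(hi (t e) *\<^sub>v (m e *\<^sub>v v)) $ r = ((pmt (d (t e)) p * m e) *\<^sub>v v) $ cc" .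
    show "((hi (t e) * m e) *\<^sub>v v) $ r = ((Mi e * hi (s e)) *\<^sub>v v) $ r"
    proof (cases "cns e (bs' (t e) ! r) \<in> B' (s e)")
      case True
      let ?c = "idx (bs' (s e)) (cns e (bs' (t e) ! r))"
      have c: "?c < nn' (s e)" and bc: "bs' (s e) ! ?c = cns e (bs' (t e) ! r)"
        using idx_props[of "bs' (s e)"] bs'[of "s e"] True unfolding nn'_def by auto
      have "(Mi e *\<^sub>v (hi (s e) *\<^sub>v v)) $ r = (hi (s e) *\<^sub>v v) $ ?c"
        using Mi_vec1[OF r c bc hv] .
      also have "\<dots> = (pmt (d (s e)) (e # p) *\<^sub>v v) $ cc"
        using hi_vec[OF c _ v, of i "e # p" cc] bc bp by simp
      also have "\<dots> = ((pmt (d (t e)) p * m e) *\<^sub>v v) $ cc" using pmt_Cons[OF h(2) e] by simp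
      finally show ?thesis using L R Lr by simp
    next
      case False
      have "(Mi e *\<^sub>v (hi (s e) *\<^sub>v v)) $ r = 0" using Mi_vec0[OF r False hv] .
      moreover have "((pmt (d (t e)) p * m e) *\<^sub>v v) $ cc = 0"
      proof -
        have "\<not> npath (s e) (e # p) i" using False bp h unfolding B'_def by auto
        hence pne: "p \<noteq> []" and hi': "(hd p, e) \<in> I" using npath_Cons h e by auto
        obtain f q where pq: "p = f # q" using pne by (cases p) auto
        have hf: "f \<in> E" "s f = t e" "npath (t f) q i" using h(2) npath_Cons pq by auto
        have qc: "pmt (d (t f)) q \<in> carrier_mat (d i) (d (t f))" using pmt_carrier[OF hf(3)] .
        have z: "m f * m e = 0\<^sub>m (d (t f)) (d (s e))"
          using rel0[of f e] hi' pq by simp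
        have "pmt (d (t e)) p = pmt (d (t f)) q * m f"
          using pmt_Cons[OF hf(3) hf(1)] hf(2) pq by simp
        hence "pmt (d (t e)) p * m e = (pmt (d (t f)) q * m f) * m e" by simp
        also have "\<dots> = pmt (d (t f)) q * (m f * m e)"
          using qc mc[OF hf(1)] mc[OF e] hf(2) by (simp add: assoc_mult_mat)
        also have "\<dots> = 0\<^sub>m (d i) (d (s e))" using z qc by simp
        finally show ?thesis using zero_mat_vec[OF v] h(3) by simp
      qed
      ultimately show ?thesis using L R Lr by simp
    qed
  qed (use Mi_carrier[of e] hi_carrier[of "t e"] hi_carrier[of "s e"] mc[OF e] in auto)
qed

lemma hi_inj:
  assumes j: "j \<in> V"
  shows "mat_inj (hi j)"
  unfolding mat_inj_def
proof (intro ballI impI)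
  fix x :: "'a vec" assume "x \<in> carrier_vec (dim_col (hi j))"
  hence x: "x \<in> carrier_vec (d j)" using hi_carrier[of j] by simp
  assume "hi j *\<^sub>v x = 0\<^sub>v (dim_row (hi j))"
  hence x0: "hi j *\<^sub>v x = 0\<^sub>v (nn' j)" using hi_carrier[of j] by simp
  show "x = 0\<^sub>v (dim_col (hi j))"
  proof (rule eq_vecI)
    fix cc assume "cc < dim_vec (0\<^sub>v (dim_col (hi j)) :: 'a vec)"
    hence cc: "cc < d j" using hi_carrier[of j] by simp
    have inB: "(j, [], cc) \<in> B' j" unfolding B'_def using j cc by (simp add: npath_Nil)
    let ?r = "idx (bs' j) (j, [], cc)"
    have r: "?r < nn' j" and br: "bs' j ! ?r = (j, [], cc)"
      using idx_props[of "bs' j"] bs'[of j] inB unfolding nn'_def by auto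
    have "(hi j *\<^sub>v x) $ ?r = (pmt (d j) [] *\<^sub>v x) $ cc" using hi_vec[OF r br x] .
    also have "\<dots> = x $ cc" using x cc by (simp add: pmt_Nil)
    finally show "x $ cc = 0\<^sub>v (dim_col (hi j)) $ cc" using x0 r cc hi_carrier[of j] by simp
  qed (use x hi_carrier[of j] in auto)
qed

end

context pcov begin

lemma Mi_exact:
  assumes rel: "(\<beta>, \<alpha>) \<in> I"
    and x: "x \<in> carrier_vec (nn' (s \<beta>))" and x0: "Mi \<beta> *\<^sub>v x = 0\<^sub>v (nn' (t \<beta>))"
  shows "\<exists>y\<in>carrier_vec (nn' (s \<alpha>)). Mi \<alpha> *\<^sub>v y = x"
proof -
  have sb: "s \<beta> = t \<alpha>" and aE: "\<alpha> \<in> E" and bE: "\<beta> \<in> E" using gentle_I[OF g rel] by auto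
  have xz: "x $ c = 0" if c: "c < nn' (s \<beta>)" and r: "r < nn' (t \<beta>)"
    and eq: "bs' (s \<beta>) ! c = cns \<beta> (bs' (t \<beta>) ! r)" for c r
  proof -
    have "(Mi \<beta> *\<^sub>v x) $ r = x $ c" using Mi_vec1[OF r c eq x] .
    thus ?thesis using x0 r by simp
  qed
  let ?P = "\<lambda>c r. r < nn' (t \<alpha>) \<and> bs' (s \<alpha>) ! c = cns \<alpha> (bs' (t \<alpha>) ! r)"
  have uniq: "r1 = r2" if "?P c r1" "?P c r2" for c r1 r2
  proof -
    have "bs' (t \<alpha>) ! r1 = bs' (t \<alpha>) ! r2" using that cns_inj by metis
    thus ?thesis using that nth_eq_iff_index_eq[OF conjunct1[OF bs'[of "t \<alpha>"]]] unfolding nn'_def by blast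
  qed
  define y where "y = vec (nn' (s \<alpha>)) (\<lambda>c. if \<exists>r. ?P c r then x $ (THE r. ?P c r) else 0)"
  have y: "y \<in> carrier_vec (nn' (s \<alpha>))" unfolding y_def by simp
  have "Mi \<alpha> *\<^sub>v y = x"
  proof (rule eq_vecI)
    fix r assume "r < dim_vec x"
    hence r: "r < nn' (t \<alpha>)" using x sb by simp
    show "(Mi \<alpha> *\<^sub>v y) $ r = x $ r"
    proof (cases "cns \<alpha> (bs' (t \<alpha>) ! r) \<in> B' (s \<alpha>)")
      case True
      let ?c = "idx (bs' (s \<alpha>)) (cns \<alpha> (bs' (t \<alpha>) ! r))"
      have c: "?c < nn' (s \<alpha>)" and bc: "bs' (s \<alpha>) ! ?c = cns \<alpha> (bs' (t \<alpha>) ! r)"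
        using idx_props[of "bs' (s \<alpha>)"] bs'[of "s \<alpha>"] True unfolding nn'_def by auto
      have "(Mi \<alpha> *\<^sub>v y) $ r = y $ ?c" using Mi_vec1[OF r c bc y] .
      also have "\<dots> = x $ (THE r'. ?P ?c r')" using c r bc unfolding y_def by auto
      also have "(THE r'. ?P ?c r') = r"
        by (rule the_equality) (use r bc uniq in blast)+
      finally show ?thesis .
    next
      case False
      have "(Mi \<alpha> *\<^sub>v y) $ r = 0" using Mi_vec0[OF r False y] .
      moreover have "x $ r = 0"
      proof -
        obtain i p cc where bp: "bs' (t \<alpha>) ! r = (i, p, cc)" by (cases "bs' (t \<alpha>) ! r") auto
        have h: "i \<in> V" "npath (t \<alpha>) p i" "cc < d i" using B'_D bs'_in[OF r] bp by auto
        have "\<not> npath (s \<alpha>) (\<alpha> # p) i" using False bp h unfolding B'_def by auto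
        hence pne: "p \<noteq> []" and hp: "(hd p, \<alpha>) \<in> I" using npath_Cons h aE by auto
        have hb: "hd p = \<beta>" using gentle_succ_uniq[OF g hp rel] .
        obtain q where pq: "p = \<beta> # q" using pne hb by (cases p) auto
        have hq: "npath (t \<beta>) q i" using h(2) npath_Cons pq by auto
        hence "(i, q, cc) \<in> B' (t \<beta>)" unfolding B'_def using h by simp
        then obtain r' where r': "r' < nn' (t \<beta>)" and br: "bs' (t \<beta>) ! r' = (i, q, cc)"
          using bs'[of "t \<beta>"] unfolding nn'_def by (metis in_set_conv_nth)
        have "bs' (s \<beta>) ! r = cns \<beta> (bs' (t \<beta>) ! r')" using br bp pq sb by simp
        thus ?thesis using xz[OF _ r'] r sb by simp
      qed
      ultimately show ?thesis by simp
    qed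
  qed (use x y Mi_carrier[of \<alpha>] sb in auto)
  thus ?thesis using y by blast
qed

end

lemma inj_exact:
  fixes m :: "'e \<Rightarrow> 'a::field mat" and V :: "'v set" and E :: "'e set"
  assumes g: "gentle V E s t I" and ij: "injective_rep V E s t I d m"
    and rel: "(\<beta>, \<alpha>) \<in> I"
    and x: "x \<in> carrier_vec (d (t \<alpha>))" and x0: "m \<beta> *\<^sub>v x = 0\<^sub>v (d (t \<beta>))"
  shows "\<exists>y\<in>carrier_vec (d (s \<alpha>)). m \<alpha> *\<^sub>v y = x"
proof -
  have rP: "is_rep V E s t I d m" using ij unfolding injective_rep_def by blast
  interpret pcov V E s t I d m by unfold_locales (rule g, rule rP)
  have sb: "s \<beta> = t \<alpha>" and aE: "\<alpha> \<in> E" and bE: "\<beta> \<in> E" using gentle_I[OF g rel] by auto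
  have sa: "s \<alpha> \<in> V" "t \<alpha> \<in> V" using gentle_st[OF g aE] by auto
  have tb: "t \<beta> \<in> V" using gentle_st[OF g bE] by auto
  have repC: "is_rep V E s t I nn' Mi"
    unfolding is_rep_def using Mi_carrier Mi_rel by auto
  have homC: "is_hom V E s t d m nn' Mi hi"
    unfolding is_hom_def using hi_carrier hi_hom by auto
  have injC: "\<forall>i\<in>V. mat_inj (hi i)" using hi_inj by auto
  have homI: "is_hom V E s t d m d m (\<lambda>i. 1\<^sub>m (d i))"
    unfolding is_hom_def
  proof (intro conjI ballI)
    fix e assume "e \<in> E"
    thus "1\<^sub>m (d (t e)) * m e = m e * 1\<^sub>m (d (s e))" using mc[of e] by simp
  qed simp
  have "\<forall>(dM :: 'v \<Rightarrow> nat) (mM :: 'e \<Rightarrow> 'a mat) dN mN g h.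
        is_rep V E s t I dM mM \<longrightarrow> is_rep V E s t I dN mN \<longrightarrow>
        is_hom V E s t dM mM dN mN g \<longrightarrow> (\<forall>i\<in>V. mat_inj (g i)) \<longrightarrow>
        is_hom V E s t dM mM d m h \<longrightarrow>
        (\<exists>k. is_hom V E s t dN mN d m k \<and> (\<forall>i\<in>V. k i * g i = h i))"
    using ij unfolding injective_rep_def by blast
  hence "\<exists>k. is_hom V E s t nn' Mi d m k \<and> (\<forall>i\<in>V. k i * hi i = 1\<^sub>m (d i))"
    using repC rP homC injC homI by blast
  then obtain k where hk: "is_hom V E s t nn' Mi d m k" and gk: "\<forall>i\<in>V. k i * hi i = 1\<^sub>m (d i)"
    by blast
  have kc: "k i \<in> carrier_mat (d i) (nn' i)" if "i \<in> V" for i using hk that unfolding is_hom_def by blast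
  have km: "k (t \<alpha>) * Mi \<alpha> = m \<alpha> * k (s \<alpha>)" using hk aE unfolding is_hom_def by blast
  define x' where "x' = hi (t \<alpha>) *\<^sub>v x"
  have x'c: "x' \<in> carrier_vec (nn' (s \<beta>))" unfolding x'_def using mult_mat_vec_carrier[OF hi_carrier x] sb by simp
  have "Mi \<beta> *\<^sub>v x' = (Mi \<beta> * hi (s \<beta>)) *\<^sub>v x"
    unfolding x'_def using assoc_mult_mat_vec[OF Mi_carrier hi_carrier, of x \<beta>] x sb by simp
  also have "\<dots> = (hi (t \<beta>) * m \<beta>) *\<^sub>v x" using hi_hom[OF bE] by simp
  also have "\<dots> = hi (t \<beta>) *\<^sub>v (m \<beta> *\<^sub>v x)" using assoc_mult_mat_vec[OF hi_carrier mc[OF bE], of x] x sb by simp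
  also have "\<dots> = 0\<^sub>v (nn' (t \<beta>))" using x0 mat_vec_zero[OF hi_carrier] by simp
  finally have "Mi \<beta> *\<^sub>v x' = 0\<^sub>v (nn' (t \<beta>))" .
  then obtain y' where y': "y' \<in> carrier_vec (nn' (s \<alpha>))" and my: "Mi \<alpha> *\<^sub>v y' = x'"
    using Mi_exact[OF rel x'c] by blast
  have "x = (k (t \<alpha>) * hi (t \<alpha>)) *\<^sub>v x" using gk sa(2) x by simp
  also have "\<dots> = k (t \<alpha>) *\<^sub>v x'" unfolding x'_def using assoc_mult_mat_vec[OF kc[OF sa(2)] hi_carrier x] .
  also have "\<dots> = k (t \<alpha>) *\<^sub>v (Mi \<alpha> *\<^sub>v y')" using my by simp
  also have "\<dots> = (k (t \<alpha>) * Mi \<alpha>) *\<^sub>v y'" using assoc_mult_mat_vec[OF kc[OF sa(2)] Mi_carrier y'] by simp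
  also have "\<dots> = (m \<alpha> * k (s \<alpha>)) *\<^sub>v y'" using km by simp
  also have "\<dots> = m \<alpha> *\<^sub>v (k (s \<alpha>) *\<^sub>v y')" using assoc_mult_mat_vec[OF mc[OF aE] kc[OF sa(1)] y'] .
  finally have "m \<alpha> *\<^sub>v (k (s \<alpha>) *\<^sub>v y') = x" by simp
  moreover have "k (s \<alpha>) *\<^sub>v y' \<in> carrier_vec (d (s \<alpha>))" using mult_mat_vec_carrier[OF kc[OF sa(1)] y'] .
  ultimately show ?thesis by blast
qed

theorem lemma3p4:
  fixes V :: "'v set" and E :: "'e set" and s t :: "'e \<Rightarrow> 'v" and I :: "('e \<times> 'e) set"
  assumes "alg_closed TYPE('a::field)"
    and "gentle V E s t I"
  shows "(\<forall>d (m :: 'e \<Rightarrow> 'a mat) d' m'.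
            projective_rep V E s t I d m \<longrightarrow> is_Phi_image V E s t I d m d' m' \<longrightarrow>
            projective_rep (aus_V V E s t I) (aus_E E s t I) (aus_s s) (aus_t t) (aus_I E s t I) d' m') \<and>
         (\<forall>d (m :: 'e \<Rightarrow> 'a mat) d' m'.
            injective_rep V E s t I d m \<longrightarrow> is_Phi_image V E s t I d m d' m' \<longrightarrow>
            injective_rep (aus_V V E s t I) (aus_E E s t I) (aus_s s) (aus_t t) (aus_I E s t I) d' m')"
proof (intro conjI allI impI)
  note g = assms(2)
  fix d :: "'v \<Rightarrow> nat" and m :: "'e \<Rightarrow> 'a mat" and d' m'
  assume pr: "projective_rep V E s t I d m" and P: "is_Phi_image V E s t I d m d' m'"
  show "projective_rep (aus_V V E s t I) (aus_E E s t I) (aus_s s) (aus_t t) (aus_I E s t I) d' m'"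
  proof (rule proj_Phi[OF g pr P])
    fix \<alpha> \<gamma> x assume a: "\<alpha> \<in> cyc_arrows E s t I" and rel: "(\<alpha>, \<gamma>) \<in> I"
      and x: "x \<in> carrier_vec (d (s \<alpha>))" and x0: "m \<alpha> *\<^sub>v x = 0\<^sub>v (d (t \<alpha>))"
    show "\<exists>y\<in>carrier_vec (d (s \<gamma>)). m \<gamma> *\<^sub>v y = x"
      by (rule proj_exact[OF g pr cyc_sub[THEN subsetD, OF a] rel x x0])
  qed
next
  note g = assms(2)
  fix d :: "'v \<Rightarrow> nat" and m :: "'e \<Rightarrow> 'a mat" and d' m'
  assume ij: "injective_rep V E s t I d m" and P: "is_Phi_image V E s t I d m d' m'"
  show "injective_rep (aus_V V E s t I) (aus_E E s t I) (aus_s s) (aus_t t) (aus_I E s t I) d' m'"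
  proof (rule inj_Phi[OF g ij P])
    fix \<alpha> \<beta> x assume a: "\<alpha> \<in> cyc_arrows E s t I" and rel: "(\<beta>, \<alpha>) \<in> I"
      and x: "x \<in> carrier_vec (d (t \<alpha>))" and x0: "m \<beta> *\<^sub>v x = 0\<^sub>v (d (t \<beta>))"
    show "\<exists>y\<in>carrier_vec (d (s \<alpha>)). m \<alpha> *\<^sub>v y = x"
      by (rule inj_exact[OF g ij rel x x0])
  qed
qed

end
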